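(* Let $K=2$ and $M\ge N$, and let the channel matrices $\mathbf H_1,\mathbf H_2\in\mathbb R^{N\times M}$, $\mathbf G_1,\mathbf G_2\in\mathbb R^{M\times N}$ be fixed and of full rank. Set $P_k=\beta_kP$ ($k=1,2$), $P_{\mathrm R,n}=\beta_{\mathrm R}P$ ($n\in\mathcal I_N$), and $\sigma_1^2=\sigma_2^2=\sigma_{\mathrm R}^2=\sigma^2$, with $\beta_1,\beta_2,\beta_{\mathrm R},\sigma^2>0$ fixed. If $\alpha\in(0,\tfrac12)\cup(\tfrac12,1)$, then $$\lim_{P/\sigma^2\to\infty}\big(R_{\mathrm{cut}}-R_{\mathrm{dist}}\big)=0,$$ i.e. the proposed distributed-relaying lattice coding scheme asymptotically achieves the (cut-set) sum-rate capacity bound of the MIMO two-way distributed-relay channel.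
   Context: Notation: $\mathcal I_L=\{1,\dots,L\}$; $[x]^+=\max\{x,0\}$; logarithms base 2. RQ decomposition $\mathbf H_k=\mathbf R_k\mathbf U_k$ with $\mathbf R_k\in\mathbb R^{N\times N}$ upper triangular, $\mathbf U_k\mathbf U_k^{\mathrm T}=\mathbf I_N$; $r_k(n,n)$ is the $(n,n)$ entry of $\mathbf R_k$; $\mathbf g_{n,k}$ is the $n$-th column of $\mathbf G_k$. $\alpha\in(0,1)$. $R_{\mathrm{dist}}$ (here with $K=2$) is the optimal value of: maximize $\sum_{k=1}^2\sum_{n=1}^N R_{k,n}$ over $P_{k,n}\ge0$, $R_{k,n}\ge0$ subject to $R_{k,n}\le\left[\frac{\alpha}{2}\log\frac{|r_k(n,n)|^2P_{k,n}}{\sigma_{\mathrm R}^2}\right]^+$ for all $k,n$; $\sum_{n\in\mathcal S}R_{k',n}\le\frac{1-\alpha}{2}\log\left|\mathbf I_M+\frac{1}{\sigma_k^2}\sum_{n\in\mathcal S}P_{\mathrm R,n}\mathbf g_{n,k}\mathbf g_{n,k}^{\mathrm T}\right|$ for all $\{k,k'\}=\{1,2\}$ and all $\mathcal S\subseteq\mathcal I_N$; and $\sum_{n=1}^NP_{k,n}\le P_k$ for $k=1,2$. $R_{\mathrm{cut}}$ (the cut-set sum-rate upper bound) is the optimal value of: maximize $R_1+R_2$ over positive semidefinite $\mathbf Q_1,\mathbf Q_2\in\mathbb R^{M\times M}$, $\mathbf Q_{\mathrm R}\in\mathbb R^{N\times N}$ and $R_1,R_2\ge0$, subject to $\mathrm{tr}(\mathbf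 Q_k)\le P_k$, $\mathrm{tr}(\mathbf Q_{\mathrm R})\le\sum_{n=1}^NP_{\mathrm R,n}$, and for $\{k,k'\}=\{1,2\}$: $R_{k'}\le\frac{\alpha}{2}\log\left|\mathbf I_N+\frac{1}{\sigma_{\mathrm R}^2}\mathbf H_{k'}\mathbf Q_{k'}\mathbf H_{k'}^{\mathrm T}\right|$ and $R_{k'}\le\frac{1-\alpha}{2}\log\left|\mathbf I_M+\frac{1}{\sigma_k^2}\mathbf G_k\mathbf Q_{\mathrm R}\mathbf G_k^{\mathrm T}\right|$. *)

theory Defs
  imports "HOL-Analysis.Analysis"
begin

definition upper_tri :: "real^('n::{finite,linorder})^('n::{finite,linorder}) \<Rightarrow> bool" where
  "upper_tri A \<longleftrightarrow> (\<forall>i j::'n. j < i \<longrightarrow> A $ i $ j = 0)"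

definition psd :: "real^'m^'m \<Rightarrow> bool" where
  "psd Q \<longleftrightarrow> transpose Q = Q \<and> (\<forall>x. 0 \<le> x \<bullet> (Q *v x))"

definition outer :: "real^'m \<Rightarrow> real^'m^'m" where
  "outer g = (\<chi> i j. g $ i * g $ j)"

definition pos :: "real \<Rightarrow> real" where
  "pos x = max x 0"

definition bc_bound :: "real \<Rightarrow> real \<Rightarrow> ('n::finite \<Rightarrow> real) \<Rightarrow> real^'n^'m \<Rightarrow> 'n set \<Rightarrow> real" where
  "bc_bound \<alpha> sk PR G S =
     (1 - \<alpha>) / 2 * log 2 (det (mat 1 + (1 / sk) *\<^sub>R (\<Sum>n\<in>S. PR n *\<^sub>R outer (column n G))))"

text \<open>Feasible sum-rates of the distributed-relaying problem (K = 2).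
  R1, R2 are the upper triangular RQ factors of H1, H2; sR, s1, s2 are the noise variances.\<close>
definition Rdist :: "real \<Rightarrow> real \<Rightarrow> real \<Rightarrow> ('n::finite \<Rightarrow> real) \<Rightarrow> real \<Rightarrow> real \<Rightarrow> real \<Rightarrow>
    real^'n^'n \<Rightarrow> real^'n^'n \<Rightarrow> real^'n^'m \<Rightarrow> real^'n^'m \<Rightarrow> real" where
  "Rdist \<alpha> P1 P2 PR sR s1 s2 R1 R2 G1 G2 =
     Sup {(\<Sum>n\<in>UNIV. Ra1 n) + (\<Sum>n\<in>UNIV. Ra2 n) | Ra1 Ra2 Pw1 Pw2.
        (\<forall>n. 0 \<le> Pw1 n \<and> 0 \<le> Pw2 n \<and> 0 \<le> Ra1 n \<and> 0 \<le> Ra2 n) \<and>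
        (\<forall>n. Ra1 n \<le> pos (\<alpha> / 2 * log 2 ((\<bar>R1 $ n $ n\<bar>)\<^sup>2 * Pw1 n / sR))) \<and>
        (\<forall>n. Ra2 n \<le> pos (\<alpha> / 2 * log 2 ((\<bar>R2 $ n $ n\<bar>)\<^sup>2 * Pw2 n / sR))) \<and>
        (\<forall>S. (\<Sum>n\<in>S. Ra1 n) \<le> bc_bound \<alpha> s2 PR G2 S) \<and>
        (\<forall>S. (\<Sum>n\<in>S. Ra2 n) \<le> bc_bound \<alpha> s1 PR G1 S) \<and>
        (\<Sum>n\<in>UNIV. Pw1 n) \<le> P1 \<and> (\<Sum>n\<in>UNIV. Pw2 n) \<le> P2}"

definition Rcut :: "real \<Rightarrow> real \<Rightarrow> real \<Rightarrow> ('n::finite \<Rightarrow> real) \<Rightarrow> real \<Rightarrow> real \<Rightarrow> real \<Rightarrow>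
    real^'m^'n \<Rightarrow> real^'m^'n \<Rightarrow> real^'n^'m \<Rightarrow> real^'n^'m \<Rightarrow> real" where
  "Rcut \<alpha> P1 P2 PR sR s1 s2 H1 H2 G1 G2 =
     Sup {Ra1 + Ra2 | Ra1 Ra2 (Q1::real^'m^'m) (Q2::real^'m^'m) (QR::real^'n^'n).
        psd Q1 \<and> psd Q2 \<and> psd QR \<and> 0 \<le> Ra1 \<and> 0 \<le> Ra2 \<and>
        trace Q1 \<le> P1 \<and> trace Q2 \<le> P2 \<and> trace QR \<le> (\<Sum>n\<in>UNIV. PR n) \<and>
        Ra1 \<le> \<alpha> / 2 * log 2 (det (mat 1 + (1 / sR) *\<^sub>R (H1 ** Q1 ** transpose H1))) \<and>
        Ra2 \<le> \<alpha> / 2 * log 2 (det (mat 1 + (1 / sR) *\<^sub>R (H2 ** Q2 ** transpose H2))) \<and>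
        Ra1 \<le> (1 - \<alpha>) / 2 * log 2 (det (mat 1 + (1 / s2) *\<^sub>R (G2 ** QR ** transpose G2))) \<and>
        Ra2 \<le> (1 - \<alpha>) / 2 * log 2 (det (mat 1 + (1 / s1) *\<^sub>R (G1 ** QR ** transpose G1)))}"

end

theory Submission
  imports Defs
begin

lemma sym_inner:
  fixes X :: "real^'n^'n"
  assumes "transpose X = X"
  shows "x \<bullet> (X *v y) = (X *v x) \<bullet> y"
proof -
  have "x \<bullet> (X *v y) = (x v* X) \<bullet> y" by (simp add: dot_lmul_matrix)
  also have "x v* X = transpose X *v x" by simp
  finally show ?thesis using assms by simp
qed

lemma quad_zero_lin:
  fixes a b :: real
  assumes "\<And>t. 2 * a * t + b * t^2 \<le> 0"
  shows "a = 0"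
proof (rule ccontr)
  assume a: "a \<noteq> 0"
  define c where "c = \<bar>b\<bar> + 1"
  have c: "c > 0" "c + b \<ge> 1" unfolding c_def by auto
  have "2 * a * (a/c) + b * (a/c)^2 = a^2 * (2 * c + b) / c^2"
    using c by (simp add: field_simps power2_eq_square)
  moreover have "a^2 * (2 * c + b) / c^2 > 0" using a c
    by (intro divide_pos_pos mult_pos_pos) auto
  ultimately show False using assms[of "a/c"] by linarith
qed

lemma spectral_subspace:
  fixes X :: "real^'n^'n"
  assumes sym: "transpose X = X"
  shows "subspace S \<Longrightarrow> dim S = d \<Longrightarrow> (\<forall>x\<in>S. X *v x \<in> S) \<Longrightarrow>
    \<exists>B. B \<subseteq> S \<and> pairwise orthogonal B \<and> (\<forall>b\<in>B. norm b = 1 \<and> X *v b = (b \<bullet> (X *v b)) *\<^sub>R b) \<and> card B = d"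
proof (induction d arbitrary: S)
  case 0
  then show ?case by (intro exI[of _ "{}"]) auto
next
  case (Suc k)
  note S = Suc.prems
  define q where "q = (\<lambda>x::real^'n. x \<bullet> (X *v x))"
  have "\<exists>u\<in>S. u \<noteq> 0"
  proof (rule ccontr)
    assume "\<not> ?thesis"
    hence "S \<subseteq> {0}" by auto
    hence "dim S \<le> dim {0::real^'n}" by (rule dim_subset)
    thus False using S(2) by simp
  qed
  then obtain u where u: "u \<in> S" "u \<noteq> 0" by blast
  define K where "K = S \<inter> sphere 0 1"
  have cK: "compact K" unfolding K_def using closed_subspace[OF S(1)] compact_sphere[of "0::real^'n" 1]
    by (metis compact_Int_closed inf_commute)
  moreover have "u /\<^sub>R norm u \<in> K" unfolding K_def using u S(1)
    by (simp add: subspace_mul)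
  hence neK: "K \<noteq> {}" by blast
  have ctK: "continuous_on K q" unfolding q_def by (intro continuous_intros)
  obtain v where v: "v \<in> K" "\<And>y. y \<in> K \<Longrightarrow> q y \<le> q v"
    using continuous_attains_sup[OF cK neK ctK] by blast
  define lam where "lam = q v"
  have vS: "v \<in> S" and nv: "norm v = 1" using v(1) unfolding K_def by auto
  have vv: "v \<bullet> v = 1" using nv by (simp add: norm_eq_1)
  have qlin: "q (a *\<^sub>R y) = a^2 * q y" for a y
    unfolding q_def by (simp add: matrix_vector_mult_scaleR power2_eq_square)
  have qle: "q y \<le> lam * (y \<bullet> y)" if "y \<in> S" for y
  proof (cases "y = 0")
    case True then show ?thesis by (simp add: q_def)
  next
    case False
    have "y /\<^sub>R norm y \<in> K" unfolding K_def using that False S(1)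
      by (simp add: subspace_mul)
    hence "q (y /\<^sub>R norm y) \<le> lam" using v(2) lam_def by blast
    hence "q y / (norm y)^2 \<le> lam" using qlin[of "inverse (norm y)" y]
      by (simp add: field_simps power2_eq_square)
    hence "q y \<le> lam * (norm y)^2" using False by (simp add: field_simps)
    thus ?thesis by (simp add: power2_norm_eq_inner)
  qed
  have orth0: "z \<bullet> (X *v v) = 0" if z: "z \<in> S" "z \<bullet> v = 0" for z
  proof (rule quad_zero_lin[where b = "q z - lam * (z \<bullet> z)"])
    fix t :: real
    have "v + t *\<^sub>R z \<in> S" using vS z S(1) by (simp add: subspace_add subspace_mul)
    hence ineq: "q (v + t *\<^sub>R z) \<le> lam * ((v + t *\<^sub>R z) \<bullet> (v + t *\<^sub>R z))" by (rule qle)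
    have E1: "q (v + t *\<^sub>R z) = lam + 2 * t * (z \<bullet> (X *v v)) + t^2 * q z"
      using sym_inner[OF sym, of v z] unfolding q_def lam_def
      by (simp add: matrix_vector_right_distrib matrix_vector_mult_scaleR inner_add_left
          inner_add_right inner_commute power2_eq_square algebra_simps)
    have E2: "(v + t *\<^sub>R z) \<bullet> (v + t *\<^sub>R z) = 1 + t^2 * (z \<bullet> z)"
      using vv z(2) by (simp add: inner_add_left inner_add_right inner_commute power2_eq_square)
    have "lam + 2 * t * (z \<bullet> (X *v v)) + t^2 * q z \<le> lam * (1 + t^2 * (z \<bullet> z))"
      using ineq unfolding E1 E2 .
    moreover have "2 * (z \<bullet> (X *v v)) * t + (q z - lam * (z \<bullet> z)) * t^2 =
       (lam + 2 * t * (z \<bullet> (X *v v)) + t^2 * q z) - lam * (1 + t^2 * (z \<bullet> z))"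
      by (simp add: algebra_simps)
    ultimately show "2 * (z \<bullet> (X *v v)) * t + (q z - lam * (z \<bullet> z)) * t^2 \<le> 0"
      by linarith
  qed
  define w where "w = X *v v - lam *\<^sub>R v"
  have wS: "w \<in> S" unfolding w_def using S(1,3) vS by (simp add: subspace_diff subspace_mul)
  have wv: "w \<bullet> v = 0" unfolding w_def lam_def q_def using vv
    by (simp add: inner_diff_left inner_diff_right inner_commute)
  have "w \<bullet> (X *v v) = 0" using orth0 wS wv by auto
  hence "w \<bullet> w = 0" unfolding w_def using wv[unfolded w_def]
    by (simp add: inner_diff_left inner_diff_right)
  hence w0: "w = 0" by simp
  have eig: "X *v v = lam *\<^sub>R v" using w0 unfolding w_def by simp
  define S' where "S' = {y \<in> S. orthogonal v y}"
  have sub': "subspace S'"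
  proof -
    have "S' = S \<inter> {y. orthogonal v y}" unfolding S'_def by blast
    thus ?thesis using subspace_inter[OF S(1) subspace_orthogonal_to_vector[of v]] by simp
  qed
  have "S' = {y \<in> S. \<forall>x \<in> span {v}. orthogonal x y}"
    unfolding S'_def span_singleton
    by (auto simp: orthogonal_def)
  moreover have "subspace (span {v})" by simp
  moreover have "span {v} \<subseteq> S" using vS S(1) by (simp add: span_minimal)
  ultimately have "dim S' + dim (span {v}) = dim S"
    using dim_subspace_orthogonal_to_vectors[OF _ S(1), of "span {v}"] by simp
  moreover have "dim (span {v}) = 1" using nv
    by (metis dim_span dim_singleton norm_zero zero_neq_one)
  ultimately have dS': "dim S' = k" using S(2) by simp
  have inv': "\<forall>x\<in>S'. X *v x \<in> S'"
  proof
    fix x assume x: "x \<in> S'"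
    have "v \<bullet> (X *v x) = (X *v v) \<bullet> x" using sym_inner[OF sym] .
    also have "\<dots> = 0" using x eig unfolding S'_def by (simp add: orthogonal_def)
    finally show "X *v x \<in> S'" using x S(3) unfolding S'_def by (simp add: orthogonal_def)
  qed
  obtain B' where B': "B' \<subseteq> S'" "pairwise orthogonal B'"
    "\<forall>b\<in>B'. norm b = 1 \<and> X *v b = (b \<bullet> (X *v b)) *\<^sub>R b" "card B' = k"
    using Suc.IH[OF sub' dS' inv'] by blast
  have vB': "v \<notin> B'" using B'(1) vv unfolding S'_def orthogonal_def by auto
  have finB': "finite B'"
  proof -
    have "0 \<notin> B'" using B'(3) by auto
    hence "independent B'" using B'(2) pairwise_orthogonal_independent by blast
    thus ?thesis using independent_imp_finite by blast
  qed
  show ?case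
  proof (intro exI[of _ "insert v B'"] conjI)
    show "insert v B' \<subseteq> S" using vS B'(1) unfolding S'_def by auto
    show "pairwise orthogonal (insert v B')"
      using B'(1,2) unfolding S'_def
      by (auto simp: pairwise_insert orthogonal_commute)
    show "\<forall>b\<in>insert v B'. norm b = 1 \<and> X *v b = (b \<bullet> (X *v b)) *\<^sub>R b"
      using B'(3) nv eig vv by (auto simp: lam_def q_def)
    show "card (insert v B') = Suc k" using vB' B'(4) finB' by simp
  qed
qed

lemma tmul_entry:
  fixes A :: "real^'n^'k" and B :: "real^'k^'k" and C :: "real^'m^'k"
  shows "(transpose A ** B ** C) $ i $ j = column i A \<bullet> (B *v column j C)"
proof -
  have "(transpose A ** B ** C) $ i $ j = (\<Sum>k\<in>UNIV. (\<Sum>l\<in>UNIV. A$l$i * B$l$k) * C$k$j)"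
    by (simp add: matrix_matrix_mult_def transpose_def)
  also have "\<dots> = (\<Sum>k\<in>UNIV. \<Sum>l\<in>UNIV. A$l$i * (B$l$k * C$k$j))"
    by (simp add: sum_distrib_right mult.assoc)
  also have "\<dots> = (\<Sum>l\<in>UNIV. \<Sum>k\<in>UNIV. A$l$i * (B$l$k * C$k$j))"
    by (rule sum.swap)
  also have "\<dots> = (\<Sum>l\<in>UNIV. A$l$i * (\<Sum>k\<in>UNIV. B$l$k * C$k$j))"
    by (simp add: sum_distrib_left)
  also have "\<dots> = column i A \<bullet> (B *v column j C)"
    by (simp add: inner_vec_def column_def matrix_vector_mult_def)
  finally show ?thesis .
qed

lemma spectral_matrix:
  fixes X :: "real^'n^'n"
  assumes sym: "transpose X = X"
  obtains V :: "real^'n^'n" and mu :: "'n \<Rightarrow> real"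
  where "orthogonal_matrix V" "\<And>j. X *v column j V = mu j *\<^sub>R column j V"
proof -
  have dU: "dim (UNIV :: (real^'n) set) = CARD('n)"
    by (simp add: DIM_cart)
  obtain B where B: "pairwise orthogonal B"
      "\<forall>b\<in>B. norm b = 1 \<and> X *v b = (b \<bullet> (X *v b)) *\<^sub>R b" "card B = CARD('n)"
    using spectral_subspace[OF sym, of UNIV "CARD('n)"] dU by auto
  have finB: "finite B" using B(3) by (metis card_ge_0_finite zero_less_card_finite)
  obtain f where f: "bij_betw f (UNIV::'n set) B"
  proof -
    have "\<exists>h. bij_betw h (UNIV::'n set) B"
      by (rule finite_same_card_bij) (use finB B(3) in auto)
    thus ?thesis using that by blast
  qed
  define V :: "real^'n^'n" where "V = (\<chi> i j. f j $ i)"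
  have col: "column j V = f j" for j
    unfolding V_def column_def by (simp add: vec_eq_iff)
  have fB: "f j \<in> B" for j using f by (auto simp: bij_betw_def)
  have finj: "f i = f j \<Longrightarrow> i = j" for i j using f by (auto simp: bij_betw_def inj_on_def)
  have ortf: "orthogonal (f i) (f j)" if "i \<noteq> j" for i j
  proof -
    have "f i \<noteq> f j" using finj that by blast
    thus ?thesis using B(1) fB[of i] fB[of j] unfolding pairwise_def by blast
  qed
  have o: "orthogonal_matrix V"
    unfolding orthogonal_matrix_orthonormal_columns col
    using B(2) fB ortf by blast
  have e: "X *v column j V = (f j \<bullet> (X *v f j)) *\<^sub>R column j V" for j
    unfolding col using B(2) fB by auto
  show ?thesis by (rule that[OF o e])
qed

lemma orth_norm1_inner:
  fixes V :: "real^'n^'n"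
  assumes "orthogonal_matrix V"
  shows "column i V \<bullet> column j V = (if i = j then 1 else 0)"
  using assms unfolding orthogonal_matrix_orthonormal_columns
  by (auto simp: orthogonal_def norm_eq_1)

lemma spectral_diag:
  fixes X :: "real^'n^'n"
  assumes sym: "transpose X = X"
  obtains mu :: "'n \<Rightarrow> real" and V :: "real^'n^'n"
  where "orthogonal_matrix V" "\<And>j. X *v column j V = mu j *\<^sub>R column j V"
    "det X = (\<Prod>j\<in>UNIV. mu j)" "trace X = (\<Sum>j\<in>UNIV. mu j)"
    "\<And>j. mu j = column j V \<bullet> (X *v column j V)"
proof -
  obtain V mu where V: "orthogonal_matrix V" "\<And>j. X *v column j V = mu j *\<^sub>R column j V"
    using spectral_matrix[OF sym] by blast
  define D where "D = transpose V ** X ** V"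
  have Dij: "D $ i $ j = (if i = j then mu j else 0)" for i j
    unfolding D_def tmul_entry V(2) using orth_norm1_inner[OF V(1)] by simp
  have "det D = det X * (det V * det V)"
    unfolding D_def by (simp add: det_mul)
  moreover have "det V * det V = 1" using det_orthogonal_matrix[OF V(1)] by auto
  ultimately have "det X = det D" by simp
  also have "\<dots> = (\<Prod>j\<in>UNIV. mu j)" by (subst det_diagonal) (auto simp: Dij)
  finally have d: "det X = (\<Prod>j\<in>UNIV. mu j)" .
  have "trace D = trace (V ** (transpose V ** X))"
    unfolding D_def by (rule trace_mul_sym)
  also have "\<dots> = trace ((V ** transpose V) ** X)"
    by (simp only: matrix_mul_assoc)
  also have "\<dots> = trace X" using V(1) unfolding orthogonal_matrix_def
    by simp
  finally have "trace X = (\<Sum>j\<in>UNIV. mu j)" by (simp add: trace_def Dij)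
  moreover have "mu j = column j V \<bullet> (X *v column j V)" for j
    using orth_norm1_inner[OF V(1), of j j] V(2)[of j] by simp
  ultimately show ?thesis using that V d by blast
qed

lemma psd_sym: "psd Q \<Longrightarrow> transpose Q = Q" by (simp add: psd_def)
lemma psd_quad: "psd Q \<Longrightarrow> 0 \<le> x \<bullet> (Q *v x)" by (simp add: psd_def)

lemma psd_det_amgm:
  fixes X :: "real^'n^'n"
  assumes "psd X"
  shows "0 \<le> det X" "det X \<le> (trace X / CARD('n)) ^ CARD('n)"
proof -
  obtain mu V where V: "orthogonal_matrix V" "det X = (\<Prod>j\<in>UNIV. mu j)"
    "trace X = (\<Sum>j\<in>UNIV. mu j)" "\<And>j. mu j = column j V \<bullet> (X *v column j V)"
    using spectral_diag[OF psd_sym[OF assms]] by metis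
  have mu0: "mu j \<ge> 0" for j using V(4) psd_quad[OF assms] by simp
  show "0 \<le> det X" using V(2) mu0 by (simp add: prod_nonneg)
  have "(\<Prod>j\<in>UNIV. mu j) powr (1 / CARD('n)) \<le> (\<Sum>j\<in>UNIV. mu j / CARD('n))"
    using arith_geom_mean[of "UNIV::'n set" mu] mu0 by simp
  also have "\<dots> = trace X / CARD('n)" using V(3) by (simp add: sum_divide_distrib)
  finally have 1: "(\<Prod>j\<in>UNIV. mu j) powr (1 / CARD('n)) \<le> trace X / CARD('n)" .
  have p0: "(\<Prod>j\<in>UNIV. mu j) \<ge> 0" using mu0 by (simp add: prod_nonneg)
  have "(\<Prod>j\<in>UNIV. mu j) = ((\<Prod>j\<in>UNIV. mu j) powr (1 / CARD('n))) ^ CARD('n)"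
  proof (cases "(\<Prod>j\<in>UNIV. mu j) = 0")
    case True then show ?thesis unfolding True by simp
  next
    case False then show ?thesis using p0 by (simp add: powr_power)
  qed
  also have "\<dots> \<le> (trace X / CARD('n)) ^ CARD('n)"
    by (rule power_mono[OF 1]) simp
  finally show "det X \<le> (trace X / CARD('n)) ^ CARD('n)" using V(2) by simp
qed

lemma map_sum_permutes:
  assumes "p1 permutes (UNIV::'a set)" "p2 permutes (UNIV::'b set)"
  shows "map_sum p1 p2 permutes (UNIV::('a+'b) set)"
proof -
  have "map_sum (inv p1) (inv p2) \<circ> map_sum p1 p2 = id"
    using permutes_inv_o(2)[OF assms(1)] permutes_inv_o(2)[OF assms(2)]
    by (simp add: map_sum.comp map_sum.id)
  moreover have "map_sum p1 p2 \<circ> map_sum (inv p1) (inv p2) = id"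
    using permutes_inv_o(1)[OF assms(1)] permutes_inv_o(1)[OF assms(2)]
    by (simp add: map_sum.comp map_sum.id)
  ultimately have "bij (map_sum p1 p2)" by (metis o_bij)
  thus ?thesis by (intro bij_imp_permutes) auto
qed

lemma map_sum_l: "map_sum p1 id = map_permutation (UNIV::'a set) (Inl :: 'a \<Rightarrow> 'a + 'b) p1"
proof
  fix x :: "'a + 'b"
  show "map_sum p1 id x = map_permutation UNIV Inl p1 x"
    by (cases x) (auto simp: map_permutation_def restrict_id_def inv_into_f_f)
qed

lemma map_sum_r: "map_sum id p2 = map_permutation (UNIV::'b set) (Inr :: 'b \<Rightarrow> 'a + 'b) p2"
proof
  fix x :: "'a + 'b"
  show "map_sum id p2 x = map_permutation UNIV Inr p2 x"
    by (cases x) (auto simp: map_permutation_def restrict_id_def inv_into_f_f)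
qed

lemma sign_map_sum:
  fixes p1 :: "'a::finite \<Rightarrow> 'a" and p2 :: "'b::finite \<Rightarrow> 'b"
  assumes "p1 permutes UNIV" "p2 permutes UNIV"
  shows "sign (map_sum p1 p2) = sign p1 * sign p2"
proof -
  have e: "map_sum p1 p2 = map_sum p1 id \<circ> map_sum id p2" by (simp add: map_sum.comp)
  have s1: "sign (map_sum p1 (id::'b\<Rightarrow>'b)) = sign p1"
    unfolding map_sum_l by (rule sign_map_permutation) (use assms in auto)
  have s2: "sign (map_sum (id::'a\<Rightarrow>'a) p2) = sign p2"
    unfolding map_sum_r by (rule sign_map_permutation) (use assms in auto)
  have q1: "map_sum p1 (id::'b\<Rightarrow>'b) permutes UNIV"
    by (rule map_sum_permutes[OF assms(1) permutes_id])
  have q2: "map_sum (id::'a\<Rightarrow>'a) p2 permutes UNIV"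
    by (rule map_sum_permutes[OF permutes_id assms(2)])
  show ?thesis unfolding e
    by (subst sign_compose) (use permutes_imp_permutation[OF _ q1] permutes_imp_permutation[OF _ q2] s1 s2 in auto)
qed

lemma perm_split:
  fixes p :: "('a::finite + 'b::finite) \<Rightarrow> ('a + 'b)"
  assumes p: "p permutes UNIV" and r: "\<And>b. p (Inr b) \<in> range Inr"
  shows "\<exists>p1 p2. p1 permutes UNIV \<and> p2 permutes UNIV \<and> p = map_sum p1 p2"
proof -
  have injp: "inj p" using p permutes_inj by blast
  have "p ` range Inr = range Inr"
    by (rule endo_inj_surj) (use r injp in \<open>auto simp: inj_on_def\<close>)
  have l: "p (Inl a) \<in> range Inl" for a
  proof (rule ccontr)
    assume "p (Inl a) \<notin> range Inl"
    then obtain c where c: "p (Inl a) = Inr c" by (cases "p (Inl a)") auto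
    have "Inr c \<in> p ` range Inr" using \<open>p ` range Inr = range Inr\<close> by auto
    then obtain b where "p (Inr b) = Inr c" by auto
    with c injp show False by (metis inj_eq sum.distinct(1))
  qed
  define p1 where "p1 = (\<lambda>a. projl (p (Inl a)))"
  define p2 where "p2 = (\<lambda>b. projr (p (Inr b)))"
  have pl: "p (Inl a) = Inl (p1 a)" for a using l[of a] unfolding p1_def by auto
  have pr: "p (Inr b) = Inr (p2 b)" for b using r[of b] unfolding p2_def by auto
  have pe: "p = map_sum p1 p2"
  proof
    fix x show "p x = map_sum p1 p2 x" by (cases x) (auto simp: pl pr)
  qed
  have "inj p1" using injp unfolding inj_def by (metis pl sum.inject(1))
  hence "bij p1" using finite_UNIV_inj_surj[of p1] by (simp add: bij_def)
  hence "p1 permutes UNIV" by (intro bij_imp_permutes) auto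
  moreover have "inj p2" using injp unfolding inj_def by (metis pr sum.inject(2))
  hence "bij p2" using finite_UNIV_inj_surj[of p2] by (simp add: bij_def)
  hence "p2 permutes UNIV" by (intro bij_imp_permutes) auto
  ultimately show ?thesis using pe by blast
qed

lemma sum_UNIV_sum: "(\<Sum>i\<in>(UNIV::('a::finite+'b::finite) set). f i) = (\<Sum>a\<in>UNIV. f (Inl a)) + (\<Sum>b\<in>UNIV. f (Inr b))"
  by (subst UNIV_Plus_UNIV[symmetric], subst sum.Plus) (auto simp: o_def)

lemma prod_UNIV_sum: "(\<Prod>i\<in>(UNIV::('a::finite+'b::finite) set). f i) = (\<Prod>a\<in>UNIV. f (Inl a)) * (\<Prod>b\<in>UNIV. f (Inr b))"
  by (subst UNIV_Plus_UNIV[symmetric], subst prod.Plus) (auto simp: o_def)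

lemma det_block_upper:
  fixes E :: "real^('m::finite+'n::finite)^('m+'n)"
  assumes z: "\<And>a b. E $ Inr b $ Inl a = 0"
  shows "det E = det (\<chi> a a'. E $ Inl a $ Inl a') * det (\<chi> b b'. E $ Inr b $ Inr b')"
proof -
  define A where "A = (\<chi> a a'. E $ Inl a $ Inl a')"
  define D where "D = (\<chi> b b'. E $ Inr b $ Inr b')"
  define f where "f = (\<lambda>p. of_int (sign p) * (\<Prod>i\<in>UNIV. E $ i $ p i))"
  define G where "G = {p. p permutes (UNIV::('m+'n) set) \<and> (\<forall>b. p (Inr b) \<in> range Inr)}"
  have "det E = sum f {p. p permutes UNIV}" unfolding det_def f_def by simp
  also have "\<dots> = sum f G"
  proof (rule sum.mono_neutral_right)
    show "finite {p. p permutes (UNIV::('m+'n) set)}" by (rule finite_permutations) simp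
    show "G \<subseteq> {p. p permutes UNIV}" unfolding G_def by auto
    show "\<forall>p\<in>{p. p permutes UNIV} - G. f p = 0"
    proof
      fix p assume "p \<in> {p. p permutes UNIV} - G"
      then obtain b where "p (Inr b) \<notin> range Inr" unfolding G_def by auto
      then obtain a where "p (Inr b) = Inl a" by (cases "p (Inr b)") auto
      hence "E $ Inr b $ p (Inr b) = 0" using z by simp
      hence "(\<Prod>i\<in>UNIV. E $ i $ p i) = 0" by (intro prod_zero) auto
      thus "f p = 0" unfolding f_def by simp
    qed
  qed
  also have "G = (\<lambda>(p1,p2). map_sum p1 p2) ` ({p. p permutes (UNIV::'m set)} \<times> {p. p permutes (UNIV::'n set)})"
    (is "G = ?R")
  proof
    show "G \<subseteq> ?R"
    proof
      fix p assume "p \<in> G"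
      then obtain p1 p2 where "p1 permutes UNIV" "p2 permutes UNIV" "p = map_sum p1 p2"
        using perm_split unfolding G_def by blast
      thus "p \<in> (\<lambda>(p1,p2). map_sum p1 p2) ` ({p. p permutes UNIV} \<times> {p. p permutes UNIV})" by auto
    qed
    show "?R \<subseteq> G" unfolding G_def using map_sum_permutes by auto
  qed
  also have "sum f \<dots> = sum (f \<circ> (\<lambda>(p1,p2). map_sum p1 p2)) ({p. p permutes (UNIV::'m set)} \<times> {p. p permutes (UNIV::'n set)})"
  proof (rule sum.reindex)
    show "inj_on (\<lambda>(p1,p2). map_sum p1 p2) ({p. p permutes (UNIV::'m set)} \<times> {p. p permutes (UNIV::'n set)})"
    proof (rule inj_onI, clarsimp)
      fix p1 p2 q1 q2 :: "_ \<Rightarrow> _"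
      assume e: "map_sum p1 p2 = map_sum q1 q2"
      have "p1 a = q1 a" for a using fun_cong[OF e, of "Inl a"] by simp
      moreover have "p2 b = q2 b" for b using fun_cong[OF e, of "Inr b"] by simp
      ultimately show "p1 = q1 \<and> p2 = q2" by auto
    qed
  qed
  also have "\<dots> = (\<Sum>(p1,p2)\<in>{p. p permutes (UNIV::'m set)} \<times> {p. p permutes (UNIV::'n set)}.
       (of_int (sign p1) * (\<Prod>a\<in>UNIV. A $ a $ p1 a)) * (of_int (sign p2) * (\<Prod>b\<in>UNIV. D $ b $ p2 b)))"
  proof (rule sum.cong[OF refl], clarsimp)
    fix p1 p2 assume ps: "p1 permutes (UNIV::'m set)" "p2 permutes (UNIV::'n set)"
    show "f (map_sum p1 p2) = of_int (sign p1) * (\<Prod>a\<in>UNIV. A $ a $ p1 a) * (of_int (sign p2) * (\<Prod>b\<in>UNIV. D $ b $ p2 b))"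
      unfolding f_def sign_map_sum[OF ps] prod_UNIV_sum A_def D_def by simp
  qed
  also have "\<dots> = det A * det D"
    unfolding det_def sum_product sum.cartesian_product by (simp add: case_prod_unfold)
  finally show ?thesis unfolding A_def D_def .
qed

definition blk :: "real^'m^'m \<Rightarrow> real^'n^'m \<Rightarrow> real^'m^'n \<Rightarrow> real^'n^'n \<Rightarrow> real^('m::finite+'n::finite)^('m+'n)" where
  "blk A B C D = (\<chi> i j. case i of Inl a \<Rightarrow> (case j of Inl b \<Rightarrow> A$a$b | Inr b \<Rightarrow> B$a$b)
                                | Inr a \<Rightarrow> (case j of Inl b \<Rightarrow> C$a$b | Inr b \<Rightarrow> D$a$b))"

lemma blk_nth [simp]:
  "blk A B C D $ Inl a $ Inl b = A$a$b" "blk A B C D $ Inl a $ Inr b' = B$a$b'"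
  "blk A B C D $ Inr a' $ Inl b = C$a'$b" "blk A B C D $ Inr a' $ Inr b' = D$a'$b'"
  by (simp_all add: blk_def)

lemma blk_mult:
  "blk A B C D ** blk A' B' C' D' =
   blk (A**A' + B**C') (A**B' + B**D') (C**A' + D**C') (C**B' + D**D')"
proof -
  have "(blk A B C D ** blk A' B' C' D') $ i $ j =
        blk (A**A' + B**C') (A**B' + B**D') (C**A' + D**C') (C**B' + D**D') $ i $ j" for i j
    by (cases i; cases j) (simp_all add: matrix_matrix_mult_def sum_UNIV_sum)
  thus ?thesis by (simp add: vec_eq_iff)
qed

lemma det_blk_upper: "det (blk A B 0 D) = det A * det D"
proof -
  have "det (blk A B 0 D) = det (\<chi> a a'. blk A B 0 D $ Inl a $ Inl a') * det (\<chi> b b'. blk A B 0 D $ Inr b $ Inr b')"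
    by (rule det_block_upper) simp
  moreover have "(\<chi> a a'. blk A B 0 D $ Inl a $ Inl a') = A" by (simp add: vec_eq_iff)
  moreover have "(\<chi> b b'. blk A B 0 D $ Inr b $ Inr b') = D" by (simp add: vec_eq_iff)
  ultimately show ?thesis by simp
qed

lemma blk_transpose: "transpose (blk A B C D) = blk (transpose A) (transpose C) (transpose B) (transpose D)"
proof -
  have "transpose (blk A B C D) $ i $ j = blk (transpose A) (transpose C) (transpose B) (transpose D) $ i $ j" for i j
    by (cases i; cases j) (simp_all add: transpose_def)
  thus ?thesis by (simp add: vec_eq_iff)
qed

lemma transpose_zero: "transpose (0::real^'n^'m) = 0"
  by (simp add: transpose_def vec_eq_iff)

lemma det_blk_lower: "det (blk A 0 C D) = det A * det D"
proof -
  have "det (blk A 0 C D) = det (transpose (blk A 0 C D))" by simp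
  also have "transpose (blk A 0 C D) = blk (transpose A) (transpose C) 0 (transpose D)"
    unfolding blk_transpose by (simp add: transpose_zero)
  also have "det \<dots> = det A * det D" by (simp add: det_blk_upper)
  finally show ?thesis .
qed

lemma mmul_zero_r [simp]: "(A::real^'n^'m) ** (0::real^'p^'n) = 0"
  by (simp add: matrix_matrix_mult_def vec_eq_iff)
lemma mmul_zero_l [simp]: "(0::real^'n^'m) ** (A::real^'p^'n) = 0"
  by (simp add: matrix_matrix_mult_def vec_eq_iff)
lemma mmul_neg_r [simp]: "(A::real^'n^'m) ** (- B::real^'p^'n) = - (A ** B)"
  by (simp add: matrix_matrix_mult_def vec_eq_iff sum_negf)

lemma mmul_neg_l [simp]: "(- A::real^'n^'m) ** (B::real^'p^'n) = - (A ** B)"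
  by (simp add: matrix_matrix_mult_def vec_eq_iff sum_negf)

lemma mmul_add_r: "((B::real^'n^'m) + C) ** (A::real^'p^'n) = B ** A + C ** A"
  by (simp add: matrix_matrix_mult_def vec_eq_iff sum.distrib algebra_simps)

lemma sylvester:
  fixes X :: "real^'n^'m" and Y :: "real^'m^'n"
  shows "det (mat 1 + X ** Y) = det (mat 1 + Y ** X)"
proof -
  define E where "E = blk (mat 1) X (- Y) (mat 1)"
  have "E = blk (mat 1 + X ** Y) X 0 (mat 1) ** blk (mat 1) 0 (- Y) (mat 1)"
    unfolding E_def blk_mult by (simp add: mmul_add_r)
  hence "det E = det (mat 1 + X ** Y)"
    by (simp add: det_mul det_blk_upper det_blk_lower)
  moreover have "E = blk (mat 1) 0 (- Y) (mat 1) ** blk (mat 1) X 0 (mat 1 + Y ** X)"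
    unfolding E_def blk_mult by (simp add: matrix_add_ldistrib algebra_simps)
  hence "det E = det (mat 1 + Y ** X)"
    by (simp add: det_mul det_blk_upper det_blk_lower)
  ultimately show ?thesis by simp
qed

lemma inj_invertible:
  fixes A :: "real^'n^'n"
  assumes "inj ((*v) A)" shows "invertible A"
proof -
  have "rank A = CARD('n)" using assms full_rank_injective by blast
  hence "det A \<noteq> 0" by (simp add: det_eq_0_rank)
  thus ?thesis by (simp add: invertible_det_nz)
qed

lemma minv:
  fixes A :: "real^'n^'n"
  assumes "invertible A"
  shows "A ** matrix_inv A = mat 1" "matrix_inv A ** A = mat 1"
proof -
  have "\<exists>A'. A ** A' = mat 1 \<and> A' ** A = mat 1" using assms by (simp add: invertible_def)
  hence "A ** matrix_inv A = mat 1 \<and> matrix_inv A ** A = mat 1"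
    unfolding matrix_inv_def by (rule someI_ex)
  thus "A ** matrix_inv A = mat 1" "matrix_inv A ** A = mat 1" by auto
qed

lemma minv_mv:
  fixes A :: "real^'n^'n"
  assumes "invertible A"
  shows "A *v (matrix_inv A *v x) = x" "matrix_inv A *v (A *v x) = x"
  using minv[OF assms] by (simp_all add: matrix_vector_mul_assoc)

lemma outer_mv: "outer g *v x = (g \<bullet> x) *\<^sub>R g"
  by (simp add: outer_def matrix_vector_mult_def vec_eq_iff inner_vec_def sum_distrib_left
      mult.commute mult.left_commute)

lemma outer_quad: "x \<bullet> (outer g *v x) = (g \<bullet> x)^2"
  by (simp add: outer_mv power2_eq_square inner_commute)

lemma transpose_outer: "transpose (outer g) = outer g"
  by (simp add: outer_def transpose_def vec_eq_iff mult.commute)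

lemma det_scaleR: "det (c *\<^sub>R (A::real^'n^'n)) = c ^ CARD('n) * det A"
proof -
  have "c *\<^sub>R A = mat c ** A" by (simp add: vec_eq_iff matrix_matrix_mult_def mat_def
        if_distrib[of "\<lambda>x. x * _"] cong: if_cong)
  moreover have "det (mat c :: real^'n^'n) = c ^ CARD('n)"
    by (subst det_diagonal) (auto simp: mat_def)
  ultimately show ?thesis by (simp add: det_mul)
qed

lemma scaleR_mmul_l: "(c *\<^sub>R (A::real^'n^'m)) ** (B::real^'p^'n) = c *\<^sub>R (A ** B)"
  by (simp add: matrix_matrix_mult_def vec_eq_iff sum_distrib_left mult.assoc)
lemma scaleR_mmul_r: "(A::real^'n^'m) ** (c *\<^sub>R (B::real^'p^'n)) = c *\<^sub>R (A ** B)"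
  by (simp add: matrix_matrix_mult_def vec_eq_iff sum_distrib_left mult.left_commute)

definition cvec :: "real^'m \<Rightarrow> real^1^'m" where "cvec g = (\<chi> i j. g $ i)"
definition rvec :: "real^'m \<Rightarrow> real^'m^1" where "rvec g = (\<chi> i j. g $ j)"

lemma outer_cr: "outer g = cvec g ** rvec g"
  by (simp add: outer_def cvec_def rvec_def matrix_matrix_mult_def vec_eq_iff)

lemma det_rank1: "det (mat 1 + cvec u ** rvec w) = 1 + w \<bullet> u"
proof -
  have "det (mat 1 + cvec u ** rvec w) = det (mat 1 + rvec w ** cvec u)" by (rule sylvester)
  also have "\<dots> = 1 + w \<bullet> u"
    by (simp add: det_1 mat_def matrix_matrix_mult_def cvec_def rvec_def inner_vec_def)
  finally show ?thesis .
qed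

lemma mdl:
  fixes Y :: "real^'n^'n"
  assumes inv: "invertible Y"
  shows "det (Y + c *\<^sub>R outer g) = det Y * (1 + c * (g \<bullet> (matrix_inv Y *v g)))"
proof -
  have "Y + c *\<^sub>R outer g = Y ** (mat 1 + cvec (c *\<^sub>R (matrix_inv Y *v g)) ** rvec g)"
  proof -
    have "cvec (c *\<^sub>R (matrix_inv Y *v g)) ** rvec g = c *\<^sub>R (matrix_inv Y ** outer g)"
      by (simp add: cvec_def rvec_def outer_def matrix_matrix_mult_def matrix_vector_mult_def
          vec_eq_iff sum_distrib_left sum_distrib_right mult.assoc mult.left_commute)
    hence "Y ** (mat 1 + cvec (c *\<^sub>R (matrix_inv Y *v g)) ** rvec g) =
        Y + c *\<^sub>R ((Y ** matrix_inv Y) ** outer g)"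
      by (simp add: matrix_add_ldistrib matrix_mul_assoc scaleR_mmul_r)
    thus ?thesis using minv(1)[OF inv] by simp
  qed
  hence "det (Y + c *\<^sub>R outer g) = det Y * (1 + g \<bullet> (c *\<^sub>R (matrix_inv Y *v g)))"
    by (simp add: det_mul det_rank1)
  thus ?thesis by simp
qed

definition pdm :: "real^'n^'n \<Rightarrow> bool" where
  "pdm Y \<longleftrightarrow> transpose Y = Y \<and> (\<forall>x. x \<bullet> x \<le> x \<bullet> (Y *v x))"

lemma pdm_inv: assumes "pdm Y" shows "invertible Y"
proof (rule inj_invertible, rule injI)
  fix x y assume "Y *v x = Y *v y"
  hence "Y *v (x - y) = 0" by (simp add: matrix_vector_mult_diff_distrib)
  hence "(x - y) \<bullet> (x - y) \<le> 0" using assms unfolding pdm_def by (metis inner_zero_right)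
  hence "(x - y) \<bullet> (x - y) = 0" using inner_ge_zero[of "x - y"] by linarith
  thus "x = y" by simp
qed

lemma var_ineq:
  fixes Y :: "real^'n^'n"
  assumes "pdm Y"
  shows "2 * (g \<bullet> y) - y \<bullet> (Y *v y) \<le> g \<bullet> (matrix_inv Y *v g)"
proof -
  have inv: "invertible Y" by (rule pdm_inv[OF assms])
  have sym: "transpose Y = Y" using assms by (simp add: pdm_def)
  define u where "u = matrix_inv Y *v g"
  have Yu: "Y *v u = g" unfolding u_def by (rule minv_mv(1)[OF inv])
  have "0 \<le> (y - u) \<bullet> (y - u)" by simp
  also have "\<dots> \<le> (y - u) \<bullet> (Y *v (y - u))" using assms by (simp add: pdm_def)
  also have "\<dots> = y \<bullet> (Y *v y) - 2 * (g \<bullet> y) + g \<bullet> u"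
    using sym_inner[OF sym, of u y] Yu
    by (simp add: matrix_vector_mult_diff_distrib inner_diff_left inner_diff_right inner_commute)
  finally show ?thesis unfolding u_def by simp
qed

lemma var_eq:
  fixes Y :: "real^'n^'n"
  assumes "pdm Y"
  shows "g \<bullet> (matrix_inv Y *v g) = 2 * (g \<bullet> (matrix_inv Y *v g)) - (matrix_inv Y *v g) \<bullet> (Y *v (matrix_inv Y *v g))"
  using minv_mv(1)[OF pdm_inv[OF assms]] by (simp add: inner_commute)

lemma inv_mono:
  fixes Y Z :: "real^'n^'n"
  assumes Y: "pdm Y" and Z: "pdm Z" and le: "\<And>x. x \<bullet> (Y *v x) \<le> x \<bullet> (Z *v x)"
  shows "g \<bullet> (matrix_inv Z *v g) \<le> g \<bullet> (matrix_inv Y *v g)"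
proof -
  define y where "y = matrix_inv Z *v g"
  have "g \<bullet> (matrix_inv Z *v g) = 2 * (g \<bullet> y) - y \<bullet> (Z *v y)"
    unfolding y_def by (rule var_eq[OF Z])
  also have "\<dots> \<le> 2 * (g \<bullet> y) - y \<bullet> (Y *v y)" using le[of y] by simp
  also have "\<dots> \<le> g \<bullet> (matrix_inv Y *v g)" by (rule var_ineq[OF Y])
  finally show ?thesis .
qed

lemma inv_lower:
  fixes Y :: "real^'n^'n"
  assumes Y: "pdm Y" and fx: "Y *v y = y" and gy: "g \<bullet> y = y \<bullet> y"
  shows "y \<bullet> y \<le> g \<bullet> (matrix_inv Y *v g)"
  using var_ineq[OF Y, of g y] fx gy by simp

lemma inv_nonneg:
  fixes Y :: "real^'n^'n"
  assumes Y: "pdm Y"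
  shows "0 \<le> g \<bullet> (matrix_inv Y *v g)"
  using var_ineq[OF Y, of g 0] by simp

lemma pdm_id: "pdm (mat 1)" by (simp add: pdm_def)

lemma inv_upper:
  fixes Y :: "real^'n^'n"
  assumes Y: "pdm Y"
  shows "g \<bullet> (matrix_inv Y *v g) \<le> g \<bullet> g"
proof -
  have "g \<bullet> (matrix_inv Y *v g) \<le> g \<bullet> (matrix_inv (mat 1::real^'n^'n) *v g)"
    by (rule inv_mono[OF pdm_id Y]) (use Y in \<open>simp add: pdm_def\<close>)
  also have "matrix_inv (mat 1::real^'n^'n) = mat 1"
    using minv(1)[of "mat 1::real^'n^'n"] pdm_inv[OF pdm_id] by simp
  finally show ?thesis by simp
qed

definition Yf :: "real \<Rightarrow> ('j \<Rightarrow> real^'n) \<Rightarrow> 'j set \<Rightarrow> real^'n^'n" where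
  "Yf t h J = mat 1 + t *\<^sub>R (\<Sum>j\<in>J. outer (h j))"

lemma sum_mv: "(\<Sum>j\<in>J. A j) *v (x::real^'n) = (\<Sum>j\<in>J. A j *v x)"
  by (induct J rule: infinite_finite_induct) (simp_all add: matrix_vector_mult_add_rdistrib)

lemma scaleR_mv: "(c *\<^sub>R (A::real^'n^'m)) *v x = c *\<^sub>R (A *v x)"
  by (simp add: vec_eq_iff matrix_vector_mult_def sum_distrib_left mult.assoc)

lemma Yf_mv: "Yf t h J *v x = x + t *\<^sub>R (\<Sum>j\<in>J. (h j \<bullet> x) *\<^sub>R h j)"
  by (simp add: Yf_def matrix_vector_mult_add_rdistrib scaleR_mv sum_mv outer_mv)

lemma Yf_quad: "x \<bullet> (Yf t h J *v x) = x \<bullet> x + t * (\<Sum>j\<in>J. (h j \<bullet> x)^2)"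
  by (simp add: Yf_mv inner_add_right inner_sum_right power2_eq_square inner_commute)

lemma Yf_sym: "transpose (Yf t h J) = Yf t h J"
  by (simp add: Yf_def transpose_def vec_eq_iff outer_def sum_component mat_def mult.commute)

lemma Yf_pdm: "0 \<le> t \<Longrightarrow> pdm (Yf t h J)"
  unfolding pdm_def using Yf_sym by (simp add: Yf_quad sum_nonneg)

lemma Yf_empty: "Yf t h {} = mat 1" by (simp add: Yf_def)

lemma Yf_insert: "finite J \<Longrightarrow> x \<notin> J \<Longrightarrow> Yf t h (insert x J) = Yf t h J + t *\<^sub>R outer (h x)"
  by (simp add: Yf_def scaleR_add_right add.commute add.left_commute)

lemma det_Yf_insert:
  assumes "finite J" "x \<notin> J" "0 \<le> t"
  shows "det (Yf t h (insert x J)) = det (Yf t h J) * (1 + t * (h x \<bullet> (matrix_inv (Yf t h J) *v h x)))"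
  unfolding Yf_insert[OF assms(1,2)] by (rule mdl[OF pdm_inv[OF Yf_pdm[OF assms(3)]]])

lemma det_Yf_ge1:
  assumes "finite J" "0 \<le> t"
  shows "1 \<le> det (Yf t h J)"
  using assms(1)
proof (induct J rule: finite_induct)
  case empty then show ?case by (simp add: Yf_empty)
next
  case (insert x J)
  have "0 \<le> h x \<bullet> (matrix_inv (Yf t h J) *v h x)" by (rule inv_nonneg[OF Yf_pdm[OF assms(2)]])
  hence f1: "1 \<le> 1 + t * (h x \<bullet> (matrix_inv (Yf t h J) *v h x))" using assms(2) by simp
  have e: "det (Yf t h (insert x J)) = det (Yf t h J) * (1 + t * (h x \<bullet> (matrix_inv (Yf t h J) *v h x)))"
    by (rule det_Yf_insert[OF insert(1,2) assms(2), where h=h])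
  have "0 \<le> det (Yf t h J)" using insert(3) by simp
  thus ?case unfolding e using mult_mono[OF insert(3) f1] by simp
qed

lemma Yf_mono:
  assumes "J \<subseteq> K" "finite K" "0 \<le> t"
  shows "x \<bullet> (Yf t h J *v x) \<le> x \<bullet> (Yf t h K *v x)"
proof -
  have "(\<Sum>j\<in>J. (h j \<bullet> x)^2) \<le> (\<Sum>j\<in>K. (h j \<bullet> x)^2)"
    by (rule sum_mono2) (use assms in auto)
  thus ?thesis unfolding Yf_quad using assms(3) by (simp add: mult_left_mono)
qed

lemma inc_mono:
  assumes "J \<subseteq> K" "finite K" "0 \<le> t"
  shows "g \<bullet> (matrix_inv (Yf t h K) *v g) \<le> g \<bullet> (matrix_inv (Yf t h J) *v g)"
  by (rule inv_mono[OF Yf_pdm[OF assms(3)] Yf_pdm[OF assms(3)] Yf_mono[OF assms]])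

lemma Yf_fix: "(\<And>j. j \<in> J \<Longrightarrow> h j \<bullet> y = 0) \<Longrightarrow> Yf t h J *v y = y"
  by (simp add: Yf_mv)

lemma chain_lower:
  assumes fin: "finite J" and t: "0 \<le> t"
    and orth: "\<And>x j. j \<noteq> x \<Longrightarrow> h j \<bullet> y x = 0" and gy: "\<And>x. h x \<bullet> y x = y x \<bullet> y x"
  shows "(\<Prod>x\<in>J. 1 + t * (y x \<bullet> y x)) \<le> det (Yf t h J)"
  using fin
proof (induct J rule: finite_induct)
  case empty then show ?case by (simp add: Yf_empty)
next
  case (insert x J)
  have "Yf t h J *v y x = y x"
  proof (rule Yf_fix)
    fix j assume "j \<in> J"
    hence "j \<noteq> x" using insert(2) by auto
    thus "h j \<bullet> y x = 0" by (rule orth)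
  qed
  hence "y x \<bullet> y x \<le> h x \<bullet> (matrix_inv (Yf t h J) *v h x)"
    by (rule inv_lower[OF Yf_pdm[OF t]]) (rule gy)
  hence le: "1 + t * (y x \<bullet> y x) \<le> 1 + t * (h x \<bullet> (matrix_inv (Yf t h J) *v h x))"
    using t by (simp add: mult_left_mono)
  have p0: "0 \<le> (\<Prod>x\<in>J. 1 + t * (y x \<bullet> y x))" using t by (simp add: prod_nonneg)
  have "(\<Prod>x\<in>insert x J. 1 + t * (y x \<bullet> y x)) = (1 + t * (y x \<bullet> y x)) * (\<Prod>x\<in>J. 1 + t * (y x \<bullet> y x))"
    using insert by simp
  also have "\<dots> \<le> (1 + t * (h x \<bullet> (matrix_inv (Yf t h J) *v h x))) * det (Yf t h J)"
  proof (rule mult_mono[OF le insert(3)])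
    have nn: "0 \<le> t * (h x \<bullet> (matrix_inv (Yf t h J) *v h x))"
      by (rule mult_nonneg_nonneg[OF t inv_nonneg[OF Yf_pdm[OF t]]])
    show "0 \<le> 1 + t * (h x \<bullet> (matrix_inv (Yf t h J) *v h x))" using nn by linarith
    show "0 \<le> (\<Prod>x\<in>J. 1 + t * (y x \<bullet> y x))" by (rule p0)
  qed
  also have "\<dots> = det (Yf t h (insert x J))"
    using det_Yf_insert[OF insert(1,2) t, where h=h] by (simp add: mult.commute)
  finally show ?case .
qed

definition inc :: "real \<Rightarrow> ('j::{finite,linorder} \<Rightarrow> real^'n) \<Rightarrow> 'j \<Rightarrow> real" where
  "inc t h x = h x \<bullet> (matrix_inv (Yf t h {j. j < x}) *v h x)"

lemma inc_nonneg: "0 \<le> t \<Longrightarrow> 0 \<le> inc t h x"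
  unfolding inc_def by (rule inv_nonneg[OF Yf_pdm])

lemma poly_le:
  fixes h :: "'j::{finite,linorder} \<Rightarrow> real^'n"
  assumes t: "0 \<le> t"
  shows "(\<Prod>x\<in>J. 1 + t * inc t h x) \<le> det (Yf t h J)"
proof -
  have "finite J" by simp
  thus ?thesis
  proof (induct J rule: finite_linorder_max_induct)
    case empty then show ?case by (simp add: Yf_empty)
  next
    case (insert x J)
    have xJ: "x \<notin> J" using insert(2) by auto
    have "inc t h x \<le> h x \<bullet> (matrix_inv (Yf t h J) *v h x)"
      unfolding inc_def by (rule inc_mono) (use insert(2) t in auto)
    hence le: "1 + t * inc t h x \<le> 1 + t * (h x \<bullet> (matrix_inv (Yf t h J) *v h x))"
      using t by (simp add: mult_left_mono)
    have p0: "0 \<le> (\<Prod>x\<in>J. 1 + t * inc t h x)"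
      by (intro prod_nonneg) (simp add: inc_nonneg[OF t] t)
    have "(\<Prod>x\<in>insert x J. 1 + t * inc t h x) = (1 + t * inc t h x) * (\<Prod>x\<in>J. 1 + t * inc t h x)"
      using insert xJ by simp
    also have "\<dots> \<le> (1 + t * (h x \<bullet> (matrix_inv (Yf t h J) *v h x))) * det (Yf t h J)"
    proof (rule mult_mono[OF le insert(3)])
      have nn: "0 \<le> t * (h x \<bullet> (matrix_inv (Yf t h J) *v h x))"
        by (rule mult_nonneg_nonneg[OF t inv_nonneg[OF Yf_pdm[OF t]]])
      show "0 \<le> 1 + t * (h x \<bullet> (matrix_inv (Yf t h J) *v h x))" using nn by linarith
      show "0 \<le> (\<Prod>x\<in>J. 1 + t * inc t h x)" by (rule p0)
    qed
    also have "\<dots> = det (Yf t h (insert x J))"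
      using det_Yf_insert[OF insert(1) xJ t, where h=h] by (simp add: mult.commute)
    finally show ?case .
  qed
qed

lemma poly_eq:
  fixes h :: "'j::{finite,linorder} \<Rightarrow> real^'n"
  assumes t: "0 \<le> t"
  shows "(\<Prod>x\<in>(UNIV::'j set). 1 + t * inc t h x) = det (Yf t h UNIV)"
proof -
  have "finite (UNIV::'j set)" by simp
  have main: "\<And>J. finite J \<Longrightarrow> (\<forall>x\<in>J. \<forall>j. j < x \<longrightarrow> j \<in> J) \<longrightarrow>
     (\<Prod>x\<in>J. 1 + t * inc t h x) = det (Yf t h J)"
  proof -
    fix J :: "'j set" assume "finite J"
    thus "(\<forall>x\<in>J. \<forall>j. j < x \<longrightarrow> j \<in> J) \<longrightarrow> (\<Prod>x\<in>J. 1 + t * inc t h x) = det (Yf t h J)"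
    proof (induct J rule: finite_linorder_max_induct)
      case empty then show ?case by (simp add: Yf_empty)
    next
      case (insert x J)
      show ?case
      proof
        assume dc: "\<forall>y\<in>insert x J. \<forall>j. j < y \<longrightarrow> j \<in> insert x J"
        have xJ: "x \<notin> J" using insert(2) by auto
        have Jeq: "J = {j. j < x}" using dc insert(2) by auto
        have dcJ: "\<forall>y\<in>J. \<forall>j. j < y \<longrightarrow> j \<in> J" using Jeq by auto
        have "(\<Prod>x\<in>insert x J. 1 + t * inc t h x) = (1 + t * inc t h x) * (\<Prod>x\<in>J. 1 + t * inc t h x)"
          using insert xJ by simp
        also have "\<dots> = (1 + t * inc t h x) * det (Yf t h J)" using insert(3) dcJ by simp
        also have "\<dots> = det (Yf t h (insert x J))"
        proof -
          have e: "det (Yf t h (insert x J)) = det (Yf t h J) * (1 + t * (h x \<bullet> (matrix_inv (Yf t h J) *v h x)))"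
            by (rule det_Yf_insert[OF insert(1) xJ t, where h=h])
          have "inc t h x = h x \<bullet> (matrix_inv (Yf t h J) *v h x)" using Jeq by (simp add: inc_def)
          thus ?thesis unfolding e by simp
        qed
        finally show "(\<Prod>x\<in>insert x J. 1 + t * inc t h x) = det (Yf t h (insert x J))" .
      qed
    qed
  qed
  show ?thesis using main[of UNIV] by simp
qed

lemma log_prod:
  fixes a :: "'j \<Rightarrow> real"
  assumes "finite J" "\<And>x. x \<in> J \<Longrightarrow> 0 < a x"
  shows "(\<Sum>x\<in>J. log 2 (a x)) = log 2 (\<Prod>x\<in>J. a x)"
  using assms
proof (induct J rule: finite_induct)
  case empty then show ?case by simp
next
  case (insert x J)
  have p: "0 < (\<Prod>x\<in>J. a x)" using insert by (simp add: prod_pos)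
  have ax: "0 < a x" using insert by simp
  have "(\<Sum>x\<in>insert x J. log 2 (a x)) = log 2 (a x) + log 2 (\<Prod>x\<in>J. a x)" using insert by simp
  also have "\<dots> = log 2 (a x * (\<Prod>x\<in>J. a x))" using p ax by (simp add: log_mult)
  finally show ?case using insert by simp
qed

lemma det_upper_lin:
  fixes A :: "real^('n::{finite,linorder})^('n::{finite,linorder})"
  assumes "upper_tri A"
  shows "det A = (\<Prod>i\<in>UNIV. A$i$i)"
proof -
  let ?U = "UNIV :: 'n set"
  have p0: "\<forall>p \<in> {p. p permutes ?U} - {id}. of_int (sign p) * (\<Prod>i\<in>?U. A$i$p i) = 0"
  proof
    fix p assume p: "p \<in> {p. p permutes ?U} - {id}"
    have "\<exists>i. p i < i"
    proof (rule ccontr)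
      assume "\<not> ?thesis"
      hence ge: "\<And>i. i \<le> p i" by (simp add: not_less)
      define S where "S = {i. p i \<noteq> i}"
      have "S \<noteq> {}" using p unfolding S_def by (auto simp: fun_eq_iff)
      define m where "m = Max S"
      have mS: "m \<in> S" unfolding m_def using \<open>S \<noteq> {}\<close> by simp
      hence "m < p m" using ge[of m] unfolding S_def by (simp add: order_le_neq_trans)
      have "p m \<notin> S"
      proof
        assume "p m \<in> S"
        hence "p m \<le> m" unfolding m_def by (simp add: Max_ge)
        thus False using \<open>m < p m\<close> by simp
      qed
      hence "p (p m) = p m" unfolding S_def by simp
      hence "p m = m" using p permutes_inj[of p ?U] by (auto simp: inj_def)
      thus False using mS unfolding S_def by simp
    qed
    then obtain i where "p i < i" by blast
    hence "A$i$p i = 0" using assms unfolding upper_tri_def by blast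
    thus "of_int (sign p) * (\<Prod>i\<in>?U. A$i$p i) = 0" by (simp add: prod_zero_iff) blast
  qed
  have "det A = (\<Sum>p\<in>{id}. of_int (sign p) * (\<Prod>i\<in>?U. A$i$p i))"
    unfolding det_def by (rule sum.mono_neutral_right) (use p0 permutes_id in auto)
  thus ?thesis by (simp add: sign_id)
qed

lemma quad_sandwich:
  fixes A :: "real^'m^'n" and B :: "real^'m^'m"
  shows "x \<bullet> ((A ** B ** transpose A) *v x) = (transpose A *v x) \<bullet> (B *v (transpose A *v x))"
proof -
  have "(A ** B ** transpose A) *v x = A *v (B *v (transpose A *v x))"
    by (metis matrix_vector_mul_assoc)
  hence "x \<bullet> ((A ** B ** transpose A) *v x) = x \<bullet> (A *v (B *v (transpose A *v x)))"
    by simp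
  also have "\<dots> = (x v* A) \<bullet> (B *v (transpose A *v x))" by (simp add: dot_lmul_matrix)
  finally show ?thesis by simp
qed

lemma psd_sandwich:
  fixes A :: "real^'m^'n" and B :: "real^'m^'m"
  assumes "psd B" shows "psd (A ** B ** transpose A)"
  unfolding psd_def
proof
  show "transpose (A ** B ** transpose A) = A ** B ** transpose A"
    using psd_sym[OF assms] by (simp add: matrix_transpose_mul matrix_mul_assoc)
  show "\<forall>x. 0 \<le> x \<bullet> ((A ** B ** transpose A) *v x)"
    using psd_quad[OF assms] by (simp add: quad_sandwich)
qed

lemma psd_gram: "psd ((A::real^'m^'n) ** transpose A)"
proof -
  have "psd (mat 1 :: real^'m^'m)" by (simp add: psd_def)
  from psd_sandwich[OF this, of A] show ?thesis by simp
qed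

lemma psd_add: "psd A \<Longrightarrow> psd B \<Longrightarrow> psd (A + B)"
  by (simp add: psd_def matrix_vector_mult_add_rdistrib inner_add_right transpose_def vec_eq_iff)

lemma psd_scale: "0 \<le> c \<Longrightarrow> psd A \<Longrightarrow> psd (c *\<^sub>R A)"
  by (simp add: psd_def scaleR_mv transpose_scalar)

lemma psd_trace_nonneg:
  fixes X :: "real^'n^'n"
  assumes "psd X" shows "0 \<le> trace X"
proof -
  have "trace X = trace (transpose (mat 1) ** X ** mat 1)" by simp
  also have "\<dots> = (\<Sum>i\<in>UNIV. column i (mat 1) \<bullet> (X *v column i (mat 1)))"
    unfolding trace_def tmul_entry ..
  also have "\<dots> \<ge> 0" using psd_quad[OF assms] by (intro sum_nonneg) auto
  finally show ?thesis .
qed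

lemma gram_outer: "(A::real^'n^'m) ** transpose A = (\<Sum>j\<in>UNIV. outer (column j A))"
  by (simp add: matrix_matrix_mult_def transpose_def outer_def column_def vec_eq_iff sum_component)

lemma mmul_diff_l: "(A::real^'n^'m) ** (B - C::real^'p^'n) = A ** B - A ** C"
  by (simp add: matrix_matrix_mult_def vec_eq_iff sum_subtractf algebra_simps)
lemma mmul_diff_r: "(B - C::real^'n^'m) ** (A::real^'p^'n) = B ** A - C ** A"
  by (simp add: matrix_matrix_mult_def vec_eq_iff sum_subtractf algebra_simps)

lemma transpose_diff: "transpose (A - B) = transpose A - transpose (B::real^'n^'m)"
  by (simp add: transpose_def vec_eq_iff)
lemma transpose_add: "transpose (A + B) = transpose A + transpose (B::real^'n^'m)"
  by (simp add: transpose_def vec_eq_iff)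

lemma trace_proj_le:
  fixes U :: "real^'m^'n" and Q :: "real^'m^'m"
  assumes U: "U ** transpose U = mat 1" and Q: "psd Q"
  shows "trace (U ** Q ** transpose U) \<le> trace Q"
proof -
  define P0 where "P0 = transpose U ** U"
  define W where "W = mat 1 - P0"
  have P0P0: "P0 ** P0 = P0" unfolding P0_def
    by (metis U matrix_mul_assoc matrix_mul_lid)
  have "W ** W = W ** mat 1 - W ** P0" unfolding W_def by (rule mmul_diff_l)
  also have "W ** P0 = P0 - P0 ** P0" unfolding W_def by (simp add: mmul_diff_r)
  finally have WW: "W ** W = W" by (simp add: P0P0)
  have Wt: "transpose W = W" unfolding W_def P0_def
    by (simp add: matrix_transpose_mul transpose_diff)
  have "trace (U ** Q ** transpose U) = trace (U ** (Q ** transpose U))"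
    by (simp add: matrix_mul_assoc)
  also have "\<dots> = trace ((Q ** transpose U) ** U)" by (rule trace_mul_sym)
  also have "\<dots> = trace (Q ** P0)" unfolding P0_def by (simp add: matrix_mul_assoc)
  finally have e1: "trace (U ** Q ** transpose U) = trace (Q ** P0)" .
  have "trace Q - trace (Q ** P0) = trace (Q ** W)"
    unfolding W_def by (simp add: mmul_diff_l trace_sub)
  also have "\<dots> = trace ((Q ** W) ** W)" by (simp add: matrix_mul_assoc[symmetric] WW)
  also have "\<dots> = trace (W ** (Q ** W))" by (rule trace_mul_sym)
  also have "\<dots> = trace (transpose W ** Q ** W)" by (simp add: Wt matrix_mul_assoc)
  also have "\<dots> \<ge> 0"
    unfolding trace_def tmul_entry using psd_quad[OF Q] by (intro sum_nonneg) auto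
  finally show ?thesis using e1 by simp
qed

lemma det_I_psd:
  fixes X :: "real^'n^'n"
  assumes "psd X" shows "1 \<le> det (mat 1 + X)"
proof -
  have sym: "transpose (mat 1 + X) = mat 1 + X" using psd_sym[OF assms] by (simp add: transpose_add)
  obtain mu V where V: "orthogonal_matrix V" "det (mat 1 + X) = (\<Prod>j\<in>UNIV. mu j)"
    "\<And>j. mu j = column j V \<bullet> ((mat 1 + X) *v column j V)"
    using spectral_diag[OF sym] by metis
  have "mu j \<ge> 1" for j
  proof -
    have "column j V \<bullet> column j V = 1" using orth_norm1_inner[OF V(1), of j j] by simp
    moreover have "0 \<le> column j V \<bullet> (X *v column j V)" by (rule psd_quad[OF assms])
    ultimately show ?thesis using V(3)[of j] by (simp add: matrix_vector_mult_add_rdistrib inner_add_right)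
  qed
  thus ?thesis using V(2) by (simp add: prod_ge_1)
qed

lemma trace_scaleR: "trace (c *\<^sub>R (A::real^'n^'n)) = c * trace A"
  by (simp add: trace_def sum_distrib_left)

lemma R_invertible:
  fixes H :: "real^'m^'n" and R :: "real^'n^'n" and U :: "real^'m^'n"
  assumes "rank H = CARD('n)" "H = R ** U"
  shows "invertible R"
proof -
  have "rank H \<le> rank R" unfolding assms(2) by (rule rank_mul_le_left)
  moreover have "rank R \<le> CARD('n)" using rank_bound[of R] by simp
  ultimately have "rank R = CARD('n)" using assms(1) by simp
  hence "det R \<noteq> 0" by (simp add: det_eq_0_rank)
  thus ?thesis by (simp add: invertible_det_nz)
qed

lemma transpose_minv:
  fixes R :: "real^'n^'n"
  assumes "invertible R"
  shows "transpose R ** transpose (matrix_inv R) = mat 1" "transpose (matrix_inv R) ** transpose R = mat 1"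
  using minv[OF assms] by (simp_all add: matrix_transpose_mul[symmetric])

lemma mac_eq:
  fixes R :: "real^'n^'n" and U :: "real^'m^'n" and Q :: "real^'m^'m"
  assumes inv: "invertible R"
  shows "mat 1 + c *\<^sub>R ((R ** U) ** Q ** transpose (R ** U)) =
    R ** (matrix_inv R ** transpose (matrix_inv R) + c *\<^sub>R (U ** Q ** transpose U)) ** transpose R"
proof -
  let ?Ri = "matrix_inv R"
  have a: "R ** (?Ri ** transpose ?Ri) ** transpose R = mat 1"
  proof -
    have "R ** (?Ri ** transpose ?Ri) ** transpose R = (R ** ?Ri) ** (transpose ?Ri ** transpose R)"
      by (simp add: matrix_mul_assoc)
    also have "\<dots> = mat 1" using minv(1)[OF inv] transpose_minv(2)[OF inv] by simp
    finally show ?thesis .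
  qed
  have b: "R ** (c *\<^sub>R (U ** Q ** transpose U)) ** transpose R = c *\<^sub>R ((R ** U) ** Q ** transpose (R ** U))"
    by (simp add: scaleR_mmul_l scaleR_mmul_r matrix_transpose_mul matrix_mul_assoc)
  show ?thesis
    by (simp add: matrix_add_ldistrib mmul_add_r a b)
qed

lemma mac_upper:
  fixes R :: "real^'n^'n" and U :: "real^'m^'n" and Q :: "real^'m^'m"
  assumes inv: "invertible R" and U: "U ** transpose U = mat 1" and Q: "psd Q" and s: "0 < s"
  shows "det (mat 1 + (1/s) *\<^sub>R ((R ** U) ** Q ** transpose (R ** U))) \<le>
    (det R)^2 * ((trace (matrix_inv R ** transpose (matrix_inv R)) + trace Q / s) / CARD('n)) ^ CARD('n)"
proof -
  let ?Ri = "matrix_inv R"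
  define X where "X = ?Ri ** transpose ?Ri + (1/s) *\<^sub>R (U ** Q ** transpose U)"
  have psdX: "psd X" unfolding X_def
    by (intro psd_add psd_gram psd_scale psd_sandwich Q) (use s in simp)
  have "trace X = trace (?Ri ** transpose ?Ri) + (1/s) * trace (U ** Q ** transpose U)"
    unfolding X_def by (simp add: trace_add trace_scaleR)
  also have "\<dots> \<le> trace (?Ri ** transpose ?Ri) + trace Q / s"
    using trace_proj_le[OF U Q] s by (simp add: divide_right_mono)
  finally have tr: "trace X \<le> trace (?Ri ** transpose ?Ri) + trace Q / s" .
  have "det X \<le> (trace X / CARD('n)) ^ CARD('n)" by (rule psd_det_amgm(2)[OF psdX])
  also have "\<dots> \<le> ((trace (?Ri ** transpose ?Ri) + trace Q / s) / CARD('n)) ^ CARD('n)"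
    by (rule power_mono) (use tr psd_trace_nonneg[OF psdX] in \<open>auto simp: divide_right_mono\<close>)
  finally have dX: "det X \<le> ((trace (?Ri ** transpose ?Ri) + trace Q / s) / CARD('n)) ^ CARD('n)" .
  have "det (mat 1 + (1/s) *\<^sub>R ((R ** U) ** Q ** transpose (R ** U))) = det R * det X * det R"
    unfolding mac_eq[OF inv] X_def by (simp add: det_mul)
  also have "\<dots> = (det R)^2 * det X" by (simp add: power2_eq_square)
  also have "\<dots> \<le> (det R)^2 * ((trace (?Ri ** transpose ?Ri) + trace Q / s) / CARD('n)) ^ CARD('n)"
    by (rule mult_left_mono[OF dX]) simp
  finally show ?thesis .
qed

lemma gram_outer_t: "transpose (A::real^'n^'m) ** A = (\<Sum>j\<in>UNIV. outer (row j A))"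
  using gram_outer[of "transpose A"] by simp

lemma mac_lower:
  fixes R :: "real^'n^'n"
  assumes inv: "invertible R" and c: "0 < c"
  shows "c ^ CARD('n) * (det R)^2 \<le> det (mat 1 + c *\<^sub>R (R ** transpose R))"
proof -
  let ?Ri = "matrix_inv R"
  define Y where "Y = Yf (1/c) (\<lambda>j. column j ?Ri) UNIV"
  have "Y = mat 1 + (1/c) *\<^sub>R (?Ri ** transpose ?Ri)" unfolding Y_def Yf_def gram_outer ..
  hence cY: "c *\<^sub>R Y = ?Ri ** transpose ?Ri + c *\<^sub>R mat 1" using c
    by (simp add: scaleR_add_right add.commute)
  have "mat 1 + c *\<^sub>R (R ** transpose R) = R ** (?Ri ** transpose ?Ri + c *\<^sub>R (mat 1 ** mat 1 ** transpose (mat 1))) ** transpose R"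
    using mac_eq[OF inv, of c "mat 1" "mat 1"] by simp
  also have "\<dots> = R ** (c *\<^sub>R Y) ** transpose R" using cY by simp
  finally have e: "det (mat 1 + c *\<^sub>R (R ** transpose R)) = det R * (c ^ CARD('n) * det Y) * det R"
    by (simp add: det_mul det_scaleR)
  have Y1: "1 \<le> det Y" unfolding Y_def by (rule det_Yf_ge1) (use c in auto)
  have K: "0 \<le> (det R)^2 * c ^ CARD('n)" using c by simp
  have "(det R)^2 * c ^ CARD('n) * 1 \<le> (det R)^2 * c ^ CARD('n) * det Y"
    by (rule mult_left_mono[OF Y1 K])
  thus ?thesis unfolding e by (simp add: power2_eq_square algebra_simps)
qed

lemma A_quad: "x \<bullet> ((transpose G ** G) *v x) = (G *v x) \<bullet> (G *v (x::real^'n))"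
proof -
  have "x \<bullet> ((transpose G ** G) *v x) = x \<bullet> (transpose G *v (G *v x))"
    by (simp add: matrix_vector_mul_assoc)
  also have "\<dots> = (x v* transpose G) \<bullet> (G *v x)" by (simp only: dot_lmul_matrix)
  finally show ?thesis by simp
qed

lemma A_invertible:
  fixes G :: "real^'n^'m"
  assumes "rank G = CARD('n)"
  shows "invertible (transpose G ** G)"
proof (rule inj_invertible, rule injI)
  have injG: "inj ((*v) G)" using assms full_rank_injective by blast
  fix x y assume "(transpose G ** G) *v x = (transpose G ** G) *v y"
  hence "(transpose G ** G) *v (x - y) = 0" by (simp add: matrix_vector_mult_diff_distrib)
  hence "(G *v (x - y)) \<bullet> (G *v (x - y)) = 0" using A_quad[of "x - y" G] by simp
  hence "G *v (x - y) = 0" by simp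
  hence "G *v x = G *v y" by (simp add: matrix_vector_mult_diff_distrib)
  thus "x = y" using injG by (simp add: inj_def)
qed

lemma A_facts:
  fixes G :: "real^'n^'m"
  assumes "rank G = CARD('n)"
  defines "A \<equiv> transpose G ** G"
  shows "transpose (matrix_inv A) = matrix_inv A"
    "matrix_inv A = transpose (G ** matrix_inv A) ** (G ** matrix_inv A)"
    "psd (matrix_inv A)" "0 < det A" "psd A"
proof -
  have inv: "invertible A" unfolding A_def by (rule A_invertible[OF assms(1)])
  let ?Ai = "matrix_inv A"
  have tA: "transpose A = A" unfolding A_def by (simp add: matrix_transpose_mul)
  have "transpose (G ** ?Ai) ** (G ** ?Ai) = transpose ?Ai ** A ** ?Ai"
    unfolding A_def by (simp add: matrix_transpose_mul matrix_mul_assoc)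
  also have "transpose ?Ai ** A = mat 1" using transpose_minv(2)[OF inv] tA by simp
  finally show e: "?Ai = transpose (G ** ?Ai) ** (G ** ?Ai)" by simp
  show "transpose ?Ai = ?Ai" by (subst e, subst e) (simp add: matrix_transpose_mul)
  show "psd ?Ai" using psd_gram[of "transpose (G ** ?Ai)"] e by simp
  show pA: "psd A" unfolding A_def using psd_gram[of "transpose G"] by simp
  have "det A \<noteq> 0" using inv by (simp add: invertible_det_nz)
  thus "0 < det A" using psd_det_amgm(1)[OF pA] by simp
qed

lemma bc_lower:
  fixes G :: "real^'n^'m"
  assumes rk: "rank G = CARD('n)" and t: "0 < t"
  shows "t ^ CARD('n) * det (transpose G ** G) \<le> det (mat 1 + t *\<^sub>R (G ** transpose G))"
proof -
  define A where "A = transpose G ** G"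
  let ?Ai = "matrix_inv A"
  define C where "C = G ** ?Ai"
  have inv: "invertible A" unfolding A_def by (rule A_invertible[OF rk])
  have Ai: "?Ai = transpose C ** C" unfolding C_def A_def using A_facts(2)[OF rk] by simp
  define Y where "Y = Yf (1/t) (\<lambda>m. row m C) UNIV"
  have "Y = mat 1 + (1/t) *\<^sub>R ?Ai" unfolding Y_def Yf_def Ai gram_outer_t ..
  hence tY: "t *\<^sub>R Y = t *\<^sub>R mat 1 + ?Ai" using t by (simp add: scaleR_add_right)
  have "det (mat 1 + t *\<^sub>R (G ** transpose G)) = det (mat 1 + G ** (t *\<^sub>R transpose G))"
    by (simp add: scaleR_mmul_r)
  also have "\<dots> = det (mat 1 + (t *\<^sub>R transpose G) ** G)" by (rule sylvester)
  also have "mat 1 + (t *\<^sub>R transpose G) ** G = A ** (t *\<^sub>R Y)"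
    unfolding tY A_def using minv(1)[OF inv[unfolded A_def]]
    by (simp add: matrix_add_ldistrib scaleR_mmul_l scaleR_mmul_r add.commute)
  also have "det \<dots> = det A * (t ^ CARD('n) * det Y)" by (simp add: det_mul det_scaleR)
  finally have e: "det (mat 1 + t *\<^sub>R (G ** transpose G)) = det A * (t ^ CARD('n) * det Y)" .
  have Y1: "1 \<le> det Y" unfolding Y_def by (rule det_Yf_ge1) (use t in auto)
  have K: "0 \<le> det A * t ^ CARD('n)" using A_facts(4)[OF rk] t unfolding A_def by simp
  have "det A * t ^ CARD('n) * 1 \<le> det A * t ^ CARD('n) * det Y" by (rule mult_left_mono[OF Y1 K])
  thus ?thesis unfolding e A_def by (simp add: algebra_simps)
qed

lemma bc_upper:
  fixes G :: "real^'n^'m" and Q :: "real^'n^'n"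
  assumes rk: "rank G = CARD('n)" and Q: "psd Q" and s: "0 < s"
  shows "det (mat 1 + (1/s) *\<^sub>R (G ** Q ** transpose G)) \<le>
    det (transpose G ** G) * ((trace (matrix_inv (transpose G ** G)) + trace Q / s) / CARD('n)) ^ CARD('n)"
proof -
  define A where "A = transpose G ** G"
  let ?Ai = "matrix_inv A"
  have inv: "invertible A" unfolding A_def by (rule A_invertible[OF rk])
  define X where "X = ?Ai + (1/s) *\<^sub>R Q"
  have psdX: "psd X" unfolding X_def using A_facts(3)[OF rk] Q s
    by (intro psd_add psd_scale) (auto simp: A_def)
  have "det (mat 1 + (1/s) *\<^sub>R (G ** Q ** transpose G)) = det (mat 1 + G ** ((1/s) *\<^sub>R (Q ** transpose G)))"
    by (simp add: scaleR_mmul_r matrix_mul_assoc)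
  also have "\<dots> = det (mat 1 + ((1/s) *\<^sub>R (Q ** transpose G)) ** G)" by (rule sylvester)
  also have "mat 1 + ((1/s) *\<^sub>R (Q ** transpose G)) ** G = X ** A"
    unfolding X_def A_def using minv(2)[OF inv[unfolded A_def]]
    by (simp add: mmul_add_r scaleR_mmul_l matrix_mul_assoc)
  also have "det (X ** A) = det X * det A" by (simp add: det_mul)
  finally have e: "det (mat 1 + (1/s) *\<^sub>R (G ** Q ** transpose G)) = det X * det A" .
  have tr: "trace X = trace ?Ai + trace Q / s" unfolding X_def by (simp add: trace_add trace_scaleR)
  have "det X \<le> ((trace ?Ai + trace Q / s) / CARD('n)) ^ CARD('n)"
    using psd_det_amgm(2)[OF psdX] tr by simp
  hence "det X * det A \<le> ((trace ?Ai + trace Q / s) / CARD('n)) ^ CARD('n) * det A"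
    using A_facts(4)[OF rk] unfolding A_def by (intro mult_right_mono) auto
  thus ?thesis unfolding e A_def by (simp add: mult.commute)
qed

lemma bc_bound_eq:
  "bc_bound \<alpha> s (\<lambda>_. p) G S = (1 - \<alpha>) / 2 * log 2 (det (Yf (p / s) (\<lambda>n. column n G) S))"
  unfolding bc_bound_def Yf_def by (simp add: scaleR_sum_right[symmetric])

lemma Yf_UNIV: "Yf t (\<lambda>n. column n G) UNIV = mat 1 + t *\<^sub>R (G ** transpose G)"
  unfolding Yf_def gram_outer ..

lemma amgm_prod:
  fixes y :: "'n::finite \<Rightarrow> real"
  assumes y0: "\<And>j. 0 \<le> y j"
  shows "(\<Prod>j\<in>UNIV. y j) \<le> ((\<Sum>j\<in>UNIV. y j) / CARD('n)) ^ CARD('n)"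
proof -
  have "(\<Prod>j\<in>UNIV. y j) powr (1 / CARD('n)) \<le> (\<Sum>j\<in>UNIV. y j / CARD('n))"
    using arith_geom_mean[of "UNIV::'n set" y] y0 by simp
  also have "\<dots> = (\<Sum>j\<in>UNIV. y j) / CARD('n)" by (simp add: sum_divide_distrib)
  finally have 1: "(\<Prod>j\<in>UNIV. y j) powr (1 / CARD('n)) \<le> (\<Sum>j\<in>UNIV. y j) / CARD('n)" .
  have p0: "(\<Prod>j\<in>UNIV. y j) \<ge> 0" using y0 by (simp add: prod_nonneg)
  have "(\<Prod>j\<in>UNIV. y j) = ((\<Prod>j\<in>UNIV. y j) powr (1 / CARD('n))) ^ CARD('n)"
  proof (cases "(\<Prod>j\<in>UNIV. y j) = 0")
    case True then show ?thesis unfolding True by simp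
  next
    case False then show ?thesis using p0 by (simp add: powr_power)
  qed
  also have "\<dots> \<le> ((\<Sum>j\<in>UNIV. y j) / CARD('n)) ^ CARD('n)"
    by (rule power_mono[OF 1]) simp
  finally show ?thesis .
qed

lemma ev_log_big:
  assumes b: "0 < b"
  shows "eventually (\<lambda>P::real. M \<le> b * log 2 P) at_top"
proof -
  have "eventually (\<lambda>P. M * ln 2 / b \<le> ln P) at_top"
    using ln_at_top by (simp add: filterlim_at_top)
  thus ?thesis
  proof (rule eventually_mono)
    fix P :: real assume "M * ln 2 / b \<le> ln P"
    hence "M * ln 2 \<le> b * ln P" using b by (simp add: field_simps)
    hence "M \<le> b * ln P / ln 2" by (simp add: field_simps)
    thus "M \<le> b * log 2 P" by (simp add: log_def)
  qed
qed

lemma log2_KP: "0 < K \<Longrightarrow> 0 < P \<Longrightarrow> log 2 (K * P) = log 2 K + log 2 P"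
  by (simp add: log_mult_pos)

lemma log2_1plus:
  assumes k: "0 < k" and P: "1 \<le> P"
  shows "log 2 (1 + k * P) \<le> log 2 (k + 1) + log 2 P"
proof -
  have "1 + k * P \<le> (k + 1) * P" using P by (simp add: algebra_simps)
  hence "log 2 (1 + k * P) \<le> log 2 ((k + 1) * P)" using k P
    by (intro log_mono) (auto simp: add_pos_nonneg)
  thus ?thesis using k P by (simp add: log_mult_pos)
qed

lemma log2_1plus_ge:
  assumes k: "0 < k" and P: "0 < P"
  shows "log 2 k + log 2 P \<le> log 2 (1 + k * P)"
proof -
  have "log 2 (k * P) \<le> log 2 (1 + k * P)" using k P by (intro log_mono) auto
  thus ?thesis using k P by (simp add: log_mult_pos)
qed

lemma ev_cmp1:
  assumes a: "0 \<le> a" "a < b" and k: "0 < k" and K: "0 < K"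
  shows "eventually (\<lambda>P. a * log 2 (1 + k * P) + C \<le> b * log 2 (K * P) + D) at_top"
proof -
  have "eventually (\<lambda>P::real. a * log 2 (k + 1) + C - b * log 2 K - D \<le> (b - a) * log 2 P) at_top"
    by (rule ev_log_big) (use a in simp)
  moreover have "eventually (\<lambda>P::real. 1 \<le> P) at_top" by (rule eventually_ge_at_top)
  ultimately show ?thesis
  proof (rule eventually_elim2)
    fix P :: real
    assume h: "a * log 2 (k + 1) + C - b * log 2 K - D \<le> (b - a) * log 2 P" and P: "1 \<le> P"
    have "a * log 2 (1 + k * P) \<le> a * (log 2 (k + 1) + log 2 P)"
      by (rule mult_left_mono[OF log2_1plus[OF k P] a(1)])
    moreover have "log 2 (K * P) = log 2 K + log 2 P" using K P by (simp add: log2_KP)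
    ultimately show "a * log 2 (1 + k * P) + C \<le> b * log 2 (K * P) + D" using h
      by (simp add: algebra_simps)
  qed
qed

lemma ev_cmp3:
  assumes a: "a < b" and k: "0 < k" and K: "0 < K"
  shows "eventually (\<lambda>P. a * log 2 (K * P) + C \<le> b * log 2 (k * P) + D) at_top"
proof -
  have "eventually (\<lambda>P::real. a * log 2 K + C - b * log 2 k - D \<le> (b - a) * log 2 P) at_top"
    by (rule ev_log_big) (use a in simp)
  moreover have "eventually (\<lambda>P::real. 1 \<le> P) at_top" by (rule eventually_ge_at_top)
  ultimately show ?thesis
  proof (rule eventually_elim2)
    fix P :: real
    assume h: "a * log 2 K + C - b * log 2 k - D \<le> (b - a) * log 2 P" and P: "1 \<le> P"
    have "log 2 (K * P) = log 2 K + log 2 P" using K P by (simp add: log2_KP)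
    moreover have "log 2 (k * P) = log 2 k + log 2 P" using k P by (simp add: log2_KP)
    ultimately show "a * log 2 (K * P) + C \<le> b * log 2 (k * P) + D" using h
      by (simp add: algebra_simps)
  qed
qed

lemma ev_cmp2:
  assumes a: "a < b" "0 \<le> b" and k: "0 < k" and K: "0 < K"
  shows "eventually (\<lambda>P. a * log 2 (K * P) + C \<le> b * log 2 (1 + k * P) + D) at_top"
proof -
  have "eventually (\<lambda>P. a * log 2 (K * P) + C \<le> b * log 2 (k * P) + D) at_top"
    by (rule ev_cmp3[OF a(1) k K])
  moreover have "eventually (\<lambda>P::real. 0 < P) at_top" by (rule eventually_gt_at_top)
  ultimately show ?thesis
  proof (rule eventually_elim2)
    fix P :: real assume h: "a * log 2 (K * P) + C \<le> b * log 2 (k * P) + D" and P: "0 < P"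
    have "log 2 (k * P) \<le> log 2 (1 + k * P)" using k P by (intro log_mono) auto
    hence "b * log 2 (k * P) \<le> b * log 2 (1 + k * P)" using a(2) by (rule mult_left_mono)
    thus "a * log 2 (K * P) + C \<le> b * log 2 (1 + k * P) + D" using h by linarith
  qed
qed

lemma lim_eps:
  assumes a: "0 \<le> a" and k: "0 < k"
  shows "((\<lambda>P. log 2 ((a + k * P) / (k * P))) \<longlongrightarrow> 0) at_top"
proof -
  have f: "filterlim (\<lambda>P::real. k * P) at_top at_top"
    using k by (intro filterlim_tendsto_pos_mult_at_top[OF tendsto_const k filterlim_ident])
  have "((\<lambda>P::real. a / (k * P)) \<longlongrightarrow> 0) at_top"
    by (rule tendsto_divide_0[OF tendsto_const]) (rule filterlim_at_top_imp_at_infinity[OF f])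
  hence "((\<lambda>P::real. 1 + a / (k * P)) \<longlongrightarrow> 1 + 0) at_top" by (rule tendsto_add[OF tendsto_const])
  hence l: "((\<lambda>P::real. log 2 (1 + a / (k * P))) \<longlongrightarrow> log 2 (1 + 0)) at_top"
    by (rule tendsto_log[OF tendsto_const]) auto
  have "eventually (\<lambda>P::real. log 2 (1 + a / (k * P)) = log 2 ((a + k * P) / (k * P))) at_top"
    using eventually_gt_at_top[of 0]
    by (rule eventually_mono) (use k in \<open>simp add: field_simps\<close>)
  from tendsto_cong[OF this] l show ?thesis by simp
qed

lemma pos_log_le:
  assumes x: "0 \<le> x" and al: "0 \<le> al"
  shows "pos (al / 2 * log 2 x) \<le> al / 2 * log 2 (1 + x)"
proof (cases "x = 0")
  case True then show ?thesis by (simp add: pos_def log_def)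
next
  case False
  hence xp: "0 < x" using x by simp
  have "log 2 x \<le> log 2 (1 + x)" using xp by (intro log_mono) auto
  hence "al / 2 * log 2 x \<le> al / 2 * log 2 (1 + x)" using al by (intro mult_left_mono) auto
  moreover have "0 \<le> al / 2 * log 2 (1 + x)" using al x by simp
  ultimately show ?thesis by (simp add: pos_def)
qed

lemma sup_bounds:
  fixes S :: "real set"
  assumes "w \<in> S" "\<And>z. z \<in> S \<Longrightarrow> z \<le> B"
  shows "w \<le> Sup S" "Sup S \<le> B"
proof -
  have bdd: "bdd_above S" using assms(2) by (auto simp: bdd_above_def)
  show "w \<le> Sup S" by (rule cSup_upper[OF assms(1) bdd])
  show "Sup S \<le> B" using assms by (intro cSup_least) auto
qed

lemma log2_prod_pow:
  assumes "0 < d" "0 < x"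
  shows "log 2 (d * x ^ n) = log 2 d + real n * log 2 x"
  using assms by (simp add: log_mult_pos log_nat_power)

lemma cut_mac_upper:
  fixes R :: "real^'n^'n" and U :: "real^'m^'n" and Q :: "real^'m^'m"
  assumes inv: "invertible R" and U: "U ** transpose U = mat 1" and Q: "psd Q"
    and tQ: "trace Q \<le> T" and s: "0 < s" and T: "0 < T"
  shows "log 2 (det (mat 1 + (1/s) *\<^sub>R ((R ** U) ** Q ** transpose (R ** U)))) \<le>
    log 2 ((det R)^2) + CARD('n) * log 2 ((trace (matrix_inv R ** transpose (matrix_inv R)) + T / s) / CARD('n))"
proof -
  let ?a = "trace (matrix_inv R ** transpose (matrix_inv R))"
  let ?D = "det (mat 1 + (1/s) *\<^sub>R ((R ** U) ** Q ** transpose (R ** U)))"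
  have a0: "0 \<le> ?a" by (rule psd_trace_nonneg[OF psd_gram])
  have D1: "1 \<le> ?D" by (rule det_I_psd, rule psd_scale) (use s psd_sandwich[OF Q] in auto)
  have dR: "0 < (det R)^2" using inv by (simp add: invertible_det_nz)
  have "?D \<le> (det R)^2 * ((?a + trace Q / s) / CARD('n)) ^ CARD('n)"
    by (rule mac_upper[OF inv U Q s])
  also have "\<dots> \<le> (det R)^2 * ((?a + T / s) / CARD('n)) ^ CARD('n)"
    using tQ s a0 psd_trace_nonneg[OF Q]
    by (intro mult_left_mono power_mono divide_right_mono) (auto simp: divide_right_mono)
  finally have le: "?D \<le> (det R)^2 * ((?a + T / s) / CARD('n)) ^ CARD('n)" .
  have x0: "0 < (?a + T / s) / CARD('n)" using a0 T s by (intro divide_pos_pos add_nonneg_pos) auto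
  have "log 2 ?D \<le> log 2 ((det R)^2 * ((?a + T / s) / CARD('n)) ^ CARD('n))"
    using D1 le by (intro log_mono) auto
  also have "\<dots> = log 2 ((det R)^2) + CARD('n) * log 2 ((?a + T / s) / CARD('n))"
    by (rule log2_prod_pow[OF dR x0])
  finally show ?thesis .
qed

lemma cut_bc_upper:
  fixes G :: "real^'n^'m" and Q :: "real^'n^'n"
  assumes rk: "rank G = CARD('n)" and Q: "psd Q" and tQ: "trace Q \<le> T" and s: "0 < s" and T: "0 < T"
  shows "log 2 (det (mat 1 + (1/s) *\<^sub>R (G ** Q ** transpose G))) \<le>
    log 2 (det (transpose G ** G)) + CARD('n) * log 2 ((trace (matrix_inv (transpose G ** G)) + T / s) / CARD('n))"
proof -
  let ?b = "trace (matrix_inv (transpose G ** G))"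
  let ?D = "det (mat 1 + (1/s) *\<^sub>R (G ** Q ** transpose G))"
  have b0: "0 \<le> ?b" by (rule psd_trace_nonneg[OF A_facts(3)[OF rk]])
  have D1: "1 \<le> ?D" by (rule det_I_psd, rule psd_scale) (use s psd_sandwich[OF Q] in auto)
  have dA: "0 < det (transpose G ** G)" by (rule A_facts(4)[OF rk])
  have "?D \<le> det (transpose G ** G) * ((?b + trace Q / s) / CARD('n)) ^ CARD('n)"
    by (rule bc_upper[OF rk Q s])
  also have "\<dots> \<le> det (transpose G ** G) * ((?b + T / s) / CARD('n)) ^ CARD('n)"
    using tQ s b0 psd_trace_nonneg[OF Q] dA
    by (intro mult_left_mono power_mono divide_right_mono) (auto simp: divide_right_mono)
  finally have le: "?D \<le> det (transpose G ** G) * ((?b + T / s) / CARD('n)) ^ CARD('n)" .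
  have x0: "0 < (?b + T / s) / CARD('n)" using b0 T s by (intro divide_pos_pos add_nonneg_pos) auto
  have "log 2 ?D \<le> log 2 (det (transpose G ** G) * ((?b + T / s) / CARD('n)) ^ CARD('n))"
    using D1 le by (intro log_mono) auto
  also have "\<dots> = log 2 (det (transpose G ** G)) + CARD('n) * log 2 ((?b + T / s) / CARD('n))"
    by (rule log2_prod_pow[OF dA x0])
  finally show ?thesis .
qed

lemma Q0_facts:
  fixes U :: "real^'m^'n" and R :: "real^'n^'n"
  assumes U: "U ** transpose U = mat 1" and q: "0 \<le> q"
  shows "psd (q *\<^sub>R (transpose U ** U))" "trace (q *\<^sub>R (transpose U ** U)) = q * CARD('n)"
    "(R ** U) ** (q *\<^sub>R (transpose U ** U)) ** transpose (R ** U) = q *\<^sub>R (R ** transpose R)"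
proof -
  show "psd (q *\<^sub>R (transpose U ** U))" using psd_gram[of "transpose U"] q by (intro psd_scale) auto
  have "trace (transpose U ** U) = trace (U ** transpose U)" by (rule trace_mul_sym)
  thus "trace (q *\<^sub>R (transpose U ** U)) = q * CARD('n)" using U by (simp add: trace_scaleR trace_I)
  have "(R ** U) ** (transpose U ** U) ** transpose (R ** U) = R ** (U ** transpose U) ** (U ** transpose U) ** transpose R"
    by (simp add: matrix_transpose_mul matrix_mul_assoc)
  thus "(R ** U) ** (q *\<^sub>R (transpose U ** U)) ** transpose (R ** U) = q *\<^sub>R (R ** transpose R)"
    using U by (simp add: scaleR_mmul_l scaleR_mmul_r)
qed

lemma cut_mac_lower:
  fixes R :: "real^'n^'n" and U :: "real^'m^'n"
  assumes inv: "invertible R" and U: "U ** transpose U = mat 1" and q: "0 < q" and s: "0 < s"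
  shows "CARD('n) * log 2 (q / s) + log 2 ((det R)^2) \<le>
    log 2 (det (mat 1 + (1/s) *\<^sub>R ((R ** U) ** (q *\<^sub>R (transpose U ** U)) ** transpose (R ** U))))"
proof -
  have e: "mat 1 + (1/s) *\<^sub>R ((R ** U) ** (q *\<^sub>R (transpose U ** U)) ** transpose (R ** U)) =
      mat 1 + (q/s) *\<^sub>R (R ** transpose R)"
    using Q0_facts(3)[OF U, of q R] q by simp
  have dR: "0 < (det R)^2" using inv by (simp add: invertible_det_nz)
  have qs: "0 < q / s" using q s by simp
  have le: "(q/s) ^ CARD('n) * (det R)^2 \<le> det (mat 1 + (q/s) *\<^sub>R (R ** transpose R))"
    by (rule mac_lower[OF inv qs])
  have "CARD('n) * log 2 (q / s) + log 2 ((det R)^2) = log 2 ((det R)^2 * (q/s) ^ CARD('n))"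
    using log2_prod_pow[OF dR qs] by simp
  also have "\<dots> \<le> log 2 (det (mat 1 + (q/s) *\<^sub>R (R ** transpose R)))"
    using le dR qs by (intro log_mono) (auto simp: mult.commute)
  finally show ?thesis unfolding e .
qed

lemma cut_bc_lower:
  fixes G :: "real^'n^'m"
  assumes rk: "rank G = CARD('n)" and p: "0 < p" and s: "0 < s"
  shows "CARD('n) * log 2 (p / s) + log 2 (det (transpose G ** G)) \<le>
    log 2 (det (mat 1 + (1/s) *\<^sub>R (G ** (p *\<^sub>R mat 1) ** transpose G)))"
    "psd (p *\<^sub>R (mat 1 :: real^'n^'n))" "trace (p *\<^sub>R (mat 1 :: real^'n^'n)) = (\<Sum>n\<in>(UNIV::'n set). p)"
proof -
  have e: "mat 1 + (1/s) *\<^sub>R (G ** (p *\<^sub>R mat 1) ** transpose G) = mat 1 + (p/s) *\<^sub>R (G ** transpose G)"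
    by (simp add: scaleR_mmul_l scaleR_mmul_r)
  have dA: "0 < det (transpose G ** G)" by (rule A_facts(4)[OF rk])
  have ps: "0 < p / s" using p s by simp
  have le: "(p/s) ^ CARD('n) * det (transpose G ** G) \<le> det (mat 1 + (p/s) *\<^sub>R (G ** transpose G))"
    by (rule bc_lower[OF rk ps])
  have "CARD('n) * log 2 (p / s) + log 2 (det (transpose G ** G)) = log 2 (det (transpose G ** G) * (p/s) ^ CARD('n))"
    using log2_prod_pow[OF dA ps] by simp
  also have "\<dots> \<le> log 2 (det (mat 1 + (p/s) *\<^sub>R (G ** transpose G)))"
    using le dA ps by (intro log_mono) (auto simp: mult.commute)
  finally show "CARD('n) * log 2 (p / s) + log 2 (det (transpose G ** G)) \<le>
    log 2 (det (mat 1 + (1/s) *\<^sub>R (G ** (p *\<^sub>R mat 1) ** transpose G)))" unfolding e .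
  show "psd (p *\<^sub>R (mat 1 :: real^'n^'n))" using p by (intro psd_scale) (auto simp: psd_def)
  show "trace (p *\<^sub>R (mat 1 :: real^'n^'n)) = (\<Sum>n\<in>(UNIV::'n set). p)"
    by (simp add: trace_scaleR trace_I)
qed

lemma tdot: "(transpose (A::real^'n^'m) ** (B::real^'p^'m)) $ i $ j = column i A \<bullet> column j B"
  by (simp add: transpose_def matrix_matrix_mult_def column_def inner_vec_def mult.commute)

lemma orth_comp:
  fixes G :: "real^'n^'m"
  assumes rk: "rank G = CARD('n)"
  obtains y :: "'n \<Rightarrow> real^'m"
  where "\<And>n j. j \<noteq> n \<Longrightarrow> column j G \<bullet> y n = 0"
    "\<And>n. column n G \<bullet> y n = y n \<bullet> y n" "\<And>n. 0 < y n \<bullet> y n"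
proof -
  define A where "A = transpose G ** G"
  have inv: "invertible A" unfolding A_def by (rule A_invertible[OF rk])
  define C where "C = G ** matrix_inv A"
  have gc: "column j G \<bullet> column n C = (if j = n then 1 else 0)" for j n
  proof -
    have "column j G \<bullet> column n C = (transpose G ** C) $ j $ n" by (simp add: tdot)
    also have "transpose G ** C = A ** matrix_inv A" unfolding C_def A_def by (simp add: matrix_mul_assoc)
    also have "\<dots> = mat 1" by (rule minv(1)[OF inv])
    finally show ?thesis by (simp add: mat_def)
  qed
  have cnz: "column n C \<bullet> column n C \<noteq> 0" for n
  proof
    assume "column n C \<bullet> column n C = 0"
    hence "column n C = 0" by simp
    thus False using gc[of n n] by simp
  qed
  define y where "y n = (1 / (column n C \<bullet> column n C)) *\<^sub>R column n C" for n
  show ?thesis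
  proof (rule that)
    fix n j :: 'n assume "j \<noteq> n"
    thus "column j G \<bullet> y n = 0" unfolding y_def using gc by simp
  next
    fix n :: 'n
    show "column n G \<bullet> y n = y n \<bullet> y n" unfolding y_def using gc[of n n] cnz[of n]
      by (simp add: power2_eq_square)
    show "0 < y n \<bullet> y n" unfolding y_def using cnz[of n]
      by (simp add: power2_eq_square inner_gt_zero_iff)
  qed
qed

lemma upper_diag_nz:
  fixes R :: "real^('n::{finite,linorder})^('n::{finite,linorder})"
  assumes inv: "invertible R" and ut: "upper_tri R"
  shows "(det R)^2 = (\<Prod>n\<in>UNIV. (R$n$n)^2)" "\<And>n. R$n$n \<noteq> 0"
proof -
  have d: "det R = (\<Prod>n\<in>UNIV. R$n$n)" by (rule det_upper_lin[OF ut])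
  thus "(det R)^2 = (\<Prod>n\<in>UNIV. (R$n$n)^2)" by (simp add: prod_power_distrib)
  have "det R \<noteq> 0" using inv by (simp add: invertible_det_nz)
  thus "\<And>n. R$n$n \<noteq> 0" using d by auto
qed

lemma dist_mac_upper:
  fixes R :: "real^('n::{finite,linorder})^('n::{finite,linorder})"
  assumes inv: "invertible R" and ut: "upper_tri R" and al: "0 \<le> al" and s: "0 < s"
    and Pw: "\<And>n. 0 \<le> Pw n" and sPw: "(\<Sum>n\<in>UNIV. Pw n) \<le> T"
    and Ra: "\<And>n. Ra n \<le> pos (al / 2 * log 2 ((\<bar>R $ n $ n\<bar>)\<^sup>2 * Pw n / s))"
  shows "(\<Sum>n\<in>UNIV. Ra n) \<le> al / 2 * (log 2 ((det R)^2) +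
     CARD('n) * log 2 (((\<Sum>n\<in>UNIV. 1 / (R$n$n)^2) + T / s) / CARD('n)))"
proof -
  note nz = upper_diag_nz(2)[OF inv ut]
  define y where "y n = 1 / (R$n$n)^2 + Pw n / s" for n
  have y0: "0 \<le> y n" for n unfolding y_def using Pw[of n] s by simp
  have ypos: "0 < y n" for n unfolding y_def using Pw[of n] s nz[of n] by (simp add: add_pos_nonneg)
  have one: "1 + (R $ n $ n)\<^sup>2 * Pw n / s = (R$n$n)^2 * y n" for n
    unfolding y_def using nz[of n] by (simp add: field_simps)
  have "(\<Sum>n\<in>UNIV. Ra n) \<le> (\<Sum>n\<in>UNIV. al / 2 * log 2 (1 + (\<bar>R $ n $ n\<bar>)\<^sup>2 * Pw n / s))"
  proof (rule sum_mono)
    fix n :: 'n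
    have "0 \<le> (\<bar>R $ n $ n\<bar>)\<^sup>2 * Pw n / s" using Pw[of n] s by simp
    from pos_log_le[OF this al] Ra[of n]
    show "Ra n \<le> al / 2 * log 2 (1 + (\<bar>R $ n $ n\<bar>)\<^sup>2 * Pw n / s)" by linarith
  qed
  also have "\<dots> = al / 2 * (\<Sum>n\<in>UNIV. log 2 ((R$n$n)^2 * y n))"
    by (simp add: sum_distrib_left one)
  also have "(\<Sum>n\<in>UNIV. log 2 ((R$n$n)^2 * y n)) = log 2 (\<Prod>n\<in>UNIV. (R$n$n)^2 * y n)"
    by (rule log_prod) (use nz ypos in auto)
  also have "(\<Prod>n\<in>UNIV. (R$n$n)^2 * y n) = (det R)^2 * (\<Prod>n\<in>UNIV. y n)"
    by (simp add: prod.distrib upper_diag_nz(1)[OF inv ut])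
  also have "log 2 \<dots> \<le> log 2 ((det R)^2 * (((\<Sum>n\<in>UNIV. 1 / (R$n$n)^2) + T / s) / CARD('n)) ^ CARD('n))"
  proof (rule log_mono)
    have dR: "0 < (det R)^2" using inv by (simp add: invertible_det_nz)
    show "0 < (det R)^2 * (\<Prod>n\<in>UNIV. y n)" using dR ypos by (simp add: prod_pos)
    have "(\<Prod>n\<in>UNIV. y n) \<le> ((\<Sum>n\<in>UNIV. y n) / CARD('n)) ^ CARD('n)" by (rule amgm_prod[OF y0])
    also have "\<dots> \<le> (((\<Sum>n\<in>UNIV. 1 / (R$n$n)^2) + T / s) / CARD('n)) ^ CARD('n)"
    proof (rule power_mono)
      have "(\<Sum>n\<in>UNIV. y n) = (\<Sum>n\<in>UNIV. 1 / (R$n$n)^2) + (\<Sum>n\<in>UNIV. Pw n) / s"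
        unfolding y_def by (simp add: sum.distrib sum_divide_distrib)
      also have "\<dots> \<le> (\<Sum>n\<in>UNIV. 1 / (R$n$n)^2) + T / s" using sPw s by (simp add: divide_right_mono)
      finally show "(\<Sum>n\<in>UNIV. y n) / CARD('n) \<le> ((\<Sum>n\<in>UNIV. 1 / (R$n$n)^2) + T / s) / CARD('n)"
        by (simp add: divide_right_mono)
      show "0 \<le> (\<Sum>n\<in>UNIV. y n) / CARD('n)" using y0 by (simp add: sum_nonneg)
    qed
    finally show "(det R)^2 * (\<Prod>n\<in>UNIV. y n) \<le> (det R)^2 * (((\<Sum>n\<in>UNIV. 1 / (R$n$n)^2) + T / s) / CARD('n)) ^ CARD('n)"
      using dR by (intro mult_left_mono) auto
  qed simp
  also have "\<dots> = log 2 ((det R)^2) + CARD('n) * log 2 (((\<Sum>n\<in>UNIV. 1 / (R$n$n)^2) + T / s) / CARD('n))"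
  proof (rule log2_prod_pow)
    show "0 < (det R)^2" using inv by (simp add: invertible_det_nz)
    have "0 < (\<Sum>n\<in>UNIV. 1 / (R$n$n)^2)" using nz by (intro sum_pos) auto
    moreover have "0 \<le> T / s"
    proof -
      have "0 \<le> (\<Sum>n\<in>UNIV. Pw n)" using Pw by (simp add: sum_nonneg)
      thus ?thesis using sPw s by simp
    qed
    ultimately show "0 < ((\<Sum>n\<in>UNIV. 1 / (R$n$n)^2) + T / s) / CARD('n)" by simp
  qed
  finally show ?thesis using al by (simp add: mult_left_mono)
qed

lemma Yf_UNIV': "mat 1 + (1/s) *\<^sub>R (G ** (p *\<^sub>R mat 1) ** transpose G) = Yf (p/s) (\<lambda>n. column n G) UNIV"
  unfolding Yf_UNIV by (simp add: scaleR_mmul_l scaleR_mmul_r)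

lemma dist_bc_upper:
  fixes G :: "real^'n^'m" and p :: real
  assumes rk: "rank G = CARD('n)" and p: "0 < p" and s: "0 < s" and al: "al \<le> 1"
    and Ra: "(\<Sum>n\<in>UNIV. Ra n) \<le> bc_bound al s (\<lambda>_. p) G UNIV"
  shows "(\<Sum>n\<in>UNIV. Ra n) \<le> (1 - al) / 2 * (log 2 (det (transpose G ** G)) +
     CARD('n) * log 2 ((trace (matrix_inv (transpose G ** G)) + (real CARD('n) * p) / s) / CARD('n)))"
proof -
  have T: "0 < real CARD('n) * p" using p by simp
  have tr: "trace (p *\<^sub>R (mat 1 :: real^'n^'n)) \<le> real CARD('n) * p" by (simp add: trace_scaleR trace_I)
  have "log 2 (det (Yf (p/s) (\<lambda>n. column n G) UNIV)) \<le> log 2 (det (transpose G ** G)) +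
     CARD('n) * log 2 ((trace (matrix_inv (transpose G ** G)) + (real CARD('n) * p) / s) / CARD('n))"
    using cut_bc_upper[OF rk _ tr s T] psd_scale[of p "mat 1"] p unfolding Yf_UNIV'
    by (simp add: psd_def)
  hence "bc_bound al s (\<lambda>_. p) G UNIV \<le> (1 - al) / 2 * (log 2 (det (transpose G ** G)) +
     CARD('n) * log 2 ((trace (matrix_inv (transpose G ** G)) + (real CARD('n) * p) / s) / CARD('n)))"
    unfolding bc_bound_eq using al by (intro mult_left_mono) auto
  thus ?thesis using Ra by linarith
qed

lemma col_nz:
  fixes G :: "real^'k^'m"
  assumes rk: "rank G = CARD('k)"
  shows "0 < column n G \<bullet> column n G"
proof -
  have injG: "inj ((*v) G)" using rk full_rank_injective by blast
  have "column n G = G *v axis n 1" by (simp add: matrix_vector_mult_basis)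
  moreover have "axis n (1::real) \<noteq> 0" by (simp add: axis_eq_0_iff)
  ultimately have "column n G \<noteq> 0" using injG by (metis inj_eq matrix_vector_mult_0_right)
  thus ?thesis by simp
qed

lemma dist_wit_lo:
  fixes R :: "real^('n::{finite,linorder})^('n::{finite,linorder})" and G :: "real^('n::{finite,linorder})^('m::finite)"
    and al be bR s :: real
  assumes inv: "invertible R" and ut: "upper_tri R" and rk: "rank G = CARD('n)"
    and al: "0 < al" "al < 1/2" and be: "0 < be" and bR: "0 < bR" and s: "0 < s"
  shows "eventually (\<lambda>P.
     (\<forall>n. 0 \<le> al / 2 * log 2 ((R$n$n)^2 * (be * P / CARD('n)) / s)) \<and>
     (\<forall>S. (\<Sum>n\<in>S. al / 2 * log 2 ((R$n$n)^2 * (be * P / CARD('n)) / s)) \<le> bc_bound al s (\<lambda>_. bR * P) G S) \<and>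
     (\<Sum>n\<in>UNIV. al / 2 * log 2 ((R$n$n)^2 * (be * P / CARD('n)) / s)) =
        al / 2 * (log 2 ((det R)^2) + CARD('n) * log 2 (be * P / (real CARD('n) * s)))) at_top"
proof -
  note nz = upper_diag_nz(2)[OF inv ut]
  obtain y where y: "\<And>n j. j \<noteq> n \<Longrightarrow> column j G \<bullet> y n = 0"
    "\<And>n. column n G \<bullet> y n = y n \<bullet> y n" "\<And>n. 0 < y n \<bullet> y n"
    using orth_comp[OF rk] by metis
  define K where "K n = (R$n$n)^2 * be / (real CARD('n) * s)" for n
  define k where "k n = bR / s * (y n \<bullet> y n)" for n
  have K0: "0 < K n" for n unfolding K_def using nz[of n] be s by simp
  have k0: "0 < k n" for n unfolding k_def using y(3)[of n] bR s by simp
  have ev1: "eventually (\<lambda>P. \<forall>n. 0 * log 2 (1 * P) + 0 \<le> al / 2 * log 2 (K n * P) + 0) at_top"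
    by (rule eventually_all_finite, rule ev_cmp3) (use al K0 in auto)
  have ev2: "eventually (\<lambda>P. \<forall>n. al / 2 * log 2 (K n * P) + 0 \<le> (1 - al) / 2 * log 2 (1 + k n * P) + 0) at_top"
    by (rule eventually_all_finite, rule ev_cmp2) (use al K0 k0 in auto)
  have ev3: "eventually (\<lambda>P::real. 0 < P) at_top" by (rule eventually_gt_at_top)
  show ?thesis using ev1 ev2 ev3
  proof (eventually_elim)
    case (elim P)
    have P: "0 < P" using elim(3) .
    have eqK: "(R$n$n)^2 * (be * P / CARD('n)) / s = K n * P" for n unfolding K_def by simp
    define t where "t = bR * P / s"
    have t: "0 < t" unfolding t_def using bR P s by simp
    have kt: "k n * P = t * (y n \<bullet> y n)" for n unfolding k_def t_def by simp
    show ?case unfolding eqK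
    proof (intro conjI allI)
      fix n show "0 \<le> al / 2 * log 2 (K n * P)" using elim(1) by simp
    next
      fix S :: "'n set"
      have "(\<Sum>n\<in>S. al / 2 * log 2 (K n * P)) \<le> (\<Sum>n\<in>S. (1 - al) / 2 * log 2 (1 + k n * P))"
        using elim(2) by (intro sum_mono) simp
      also have "\<dots> = (1 - al) / 2 * (\<Sum>n\<in>S. log 2 (1 + t * (y n \<bullet> y n)))"
        by (simp add: sum_distrib_left kt)
      also have "(\<Sum>n\<in>S. log 2 (1 + t * (y n \<bullet> y n))) = log 2 (\<Prod>n\<in>S. 1 + t * (y n \<bullet> y n))"
        by (rule log_prod) (use t in \<open>auto intro: add_pos_nonneg\<close>)
      also have "\<dots> \<le> log 2 (det (Yf t (\<lambda>n. column n G) S))"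
      proof (rule log_mono)
        show "0 < (\<Prod>n\<in>S. 1 + t * (y n \<bullet> y n))" using t by (intro prod_pos) (auto intro: add_pos_nonneg)
        show "(\<Prod>n\<in>S. 1 + t * (y n \<bullet> y n)) \<le> det (Yf t (\<lambda>n. column n G) S)"
          by (rule chain_lower) (use t y in auto)
      qed simp
      finally show "(\<Sum>n\<in>S. al / 2 * log 2 (K n * P)) \<le> bc_bound al s (\<lambda>_. bR * P) G S"
        unfolding bc_bound_eq t_def using al by (simp add: mult_left_mono)
    next
      have "(\<Sum>n\<in>UNIV. al / 2 * log 2 (K n * P)) = al / 2 * (\<Sum>n\<in>UNIV. log 2 (K n * P))"
        by (simp add: sum_distrib_left)
      also have "(\<Sum>n\<in>UNIV. log 2 (K n * P)) = log 2 (\<Prod>n\<in>UNIV. K n * P)"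
        by (rule log_prod) (use K0 P in auto)
      also have "(\<Prod>n\<in>UNIV. K n * P) = (det R)^2 * (be * P / (real CARD('n) * s)) ^ CARD('n)"
      proof -
        define c where "c = be * P / (real CARD('n) * s)"
        have eqc: "K n * P = (R$n$n)^2 * c" for n unfolding K_def c_def by simp
        have "(\<Prod>n\<in>UNIV. K n * P) = (\<Prod>n\<in>UNIV. (R$n$n)^2 * c)" by (simp only: eqc)
        also have "\<dots> = (\<Prod>n\<in>UNIV. (R$n$n)^2) * (\<Prod>n\<in>(UNIV::'n set). c)" by (rule prod.distrib)
        also have "(\<Prod>n\<in>(UNIV::'n set). c) = c ^ CARD('n)" by simp
        finally show ?thesis unfolding upper_diag_nz(1)[OF inv ut] c_def .
      qed
      also have "log 2 \<dots> = log 2 ((det R)^2) + CARD('n) * log 2 (be * P / (real CARD('n) * s))"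
        by (rule log2_prod_pow) (use inv be P s in \<open>auto simp: invertible_det_nz\<close>)
      finally show "(\<Sum>n\<in>UNIV. al / 2 * log 2 (K n * P)) =
        al / 2 * (log 2 ((det R)^2) + CARD('n) * log 2 (be * P / (real CARD('n) * s)))" .
    qed
  qed
qed


lemma dist_wit_hi:
  fixes R :: "real^('n::{finite,linorder})^('n::{finite,linorder})" and G :: "real^('n::{finite,linorder})^('m::finite)"
    and al be bR s :: real
  assumes inv: "invertible R" and ut: "upper_tri R" and rk: "rank G = CARD('n)"
    and al: "1/2 < al" "al < 1" and be: "0 < be" and bR: "0 < bR" and s: "0 < s"
  shows "eventually (\<lambda>P.
     (\<forall>n. 0 \<le> (1 - al) / 2 * log 2 (1 + (bR * P / s) * inc (bR * P / s) (\<lambda>n. column n G) n)) \<and>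
     (\<forall>n. (1 - al) / 2 * log 2 (1 + (bR * P / s) * inc (bR * P / s) (\<lambda>n. column n G) n) \<le>
          al / 2 * log 2 ((R$n$n)^2 * (be * P / CARD('n)) / s)) \<and>
     (\<forall>S. (\<Sum>n\<in>S. (1 - al) / 2 * log 2 (1 + (bR * P / s) * inc (bR * P / s) (\<lambda>n. column n G) n))
          \<le> bc_bound al s (\<lambda>_. bR * P) G S) \<and>
     (1 - al) / 2 * (CARD('n) * log 2 (bR * P / s) + log 2 (det (transpose G ** G))) \<le>
       (\<Sum>n\<in>UNIV. (1 - al) / 2 * log 2 (1 + (bR * P / s) * inc (bR * P / s) (\<lambda>n. column n G) n))) at_top"
proof -
  note nz = upper_diag_nz(2)[OF inv ut]
  define g where "g = (\<lambda>n. column n G)"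
  define K where "K n = (R$n$n)^2 * be / (real CARD('n) * s)" for n
  define k where "k n = bR / s * (g n \<bullet> g n)" for n
  have K0: "0 < K n" for n unfolding K_def using nz[of n] be s by simp
  have k0: "0 < k n" for n unfolding k_def g_def using col_nz[OF rk, of n] bR s by simp
  have ev1: "eventually (\<lambda>P. \<forall>n. (1 - al) / 2 * log 2 (1 + k n * P) + 0 \<le> al / 2 * log 2 (K n * P) + 0) at_top"
    by (rule eventually_all_finite, rule ev_cmp1) (use al K0 k0 in auto)
  have ev3: "eventually (\<lambda>P::real. 0 < P) at_top" by (rule eventually_gt_at_top)
  show ?thesis using ev1 ev3 unfolding g_def[symmetric]
  proof (eventually_elim)
    case (elim P)
    have P: "0 < P" using elim(2) .
    define t where "t = bR * P / s"
    have t: "0 < t" unfolding t_def using bR P s by simp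
    have eqK: "(R$n$n)^2 * (be * P / CARD('n)) / s = K n * P" for n unfolding K_def by simp
    have inc0: "0 \<le> inc t g n" for n by (rule inc_nonneg) (use t in simp)
    have pos1: "0 < 1 + t * inc t g n" for n using inc0[of n] t by (simp add: add_pos_nonneg)
    show ?case unfolding eqK t_def[symmetric]
    proof (intro conjI allI)
      fix n
      have "0 \<le> t * inc t g n" using inc0[of n] t by simp
      hence "log 2 1 \<le> log 2 (1 + t * inc t g n)" by (intro log_mono) auto
      hence "0 \<le> log 2 (1 + t * inc t g n)" by simp
      thus "0 \<le> (1 - al) / 2 * log 2 (1 + t * inc t g n)" using al by simp
      have "inc t g n \<le> g n \<bullet> g n" unfolding inc_def by (rule inv_upper[OF Yf_pdm]) (use t in simp)
      hence "t * inc t g n \<le> t * (g n \<bullet> g n)" using t by (intro mult_left_mono) auto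
      moreover have "k n * P = t * (g n \<bullet> g n)" unfolding k_def t_def by simp
      ultimately have "1 + t * inc t g n \<le> 1 + k n * P" by simp
      hence "log 2 (1 + t * inc t g n) \<le> log 2 (1 + k n * P)" using pos1[of n] by (intro log_mono) auto
      hence "(1 - al) / 2 * log 2 (1 + t * inc t g n) \<le> (1 - al) / 2 * log 2 (1 + k n * P)"
        using al by (intro mult_left_mono) auto
      thus "(1 - al) / 2 * log 2 (1 + t * inc t g n) \<le> al / 2 * log 2 (K n * P)" using elim(1) by smt
    next
      fix S :: "'n set"
      have "(\<Sum>n\<in>S. (1 - al) / 2 * log 2 (1 + t * inc t g n)) = (1 - al) / 2 * (\<Sum>n\<in>S. log 2 (1 + t * inc t g n))"
        by (simp add: sum_distrib_left)
      also have "(\<Sum>n\<in>S. log 2 (1 + t * inc t g n)) = log 2 (\<Prod>n\<in>S. 1 + t * inc t g n)"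
        by (rule log_prod) (use pos1 in auto)
      also have "\<dots> \<le> log 2 (det (Yf t g S))"
        by (rule log_mono) (use pos1 poly_le[of t g S] t in \<open>auto intro: prod_pos\<close>)
      finally show "(\<Sum>n\<in>S. (1 - al) / 2 * log 2 (1 + t * inc t g n)) \<le> bc_bound al s (\<lambda>_. bR * P) G S"
        unfolding bc_bound_eq t_def g_def using al by (simp add: mult_left_mono)
    next
      have "(\<Sum>n\<in>UNIV. (1 - al) / 2 * log 2 (1 + t * inc t g n)) = (1 - al) / 2 * (\<Sum>n\<in>UNIV. log 2 (1 + t * inc t g n))"
        by (simp add: sum_distrib_left)
      also have "(\<Sum>n\<in>UNIV. log 2 (1 + t * inc t g n)) = log 2 (\<Prod>n\<in>UNIV. 1 + t * inc t g n)"
        by (rule log_prod) (use pos1 in auto)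
      also have "\<dots> = log 2 (det (Yf t g UNIV))" using poly_eq[of t g] t by simp
      also have "Yf t g UNIV = mat 1 + (1/s) *\<^sub>R (G ** ((bR * P) *\<^sub>R mat 1) ** transpose G)"
        unfolding Yf_UNIV' g_def t_def ..
      finally have e: "(\<Sum>n\<in>UNIV. (1 - al) / 2 * log 2 (1 + t * inc t g n)) =
          (1 - al) / 2 * log 2 (det (mat 1 + (1/s) *\<^sub>R (G ** ((bR * P) *\<^sub>R mat 1) ** transpose G)))" .
      have "CARD('n) * log 2 (bR * P / s) + log 2 (det (transpose G ** G)) \<le>
          log 2 (det (mat 1 + (1/s) *\<^sub>R (G ** ((bR * P) *\<^sub>R mat 1) ** transpose G)))"
        by (rule cut_bc_lower(1)[OF rk _ s]) (use bR P in simp)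
      hence X: "(1 - al) / 2 * (CARD('n) * log 2 (bR * P / s) + log 2 (det (transpose G ** G))) \<le>
          (1 - al) / 2 * log 2 (det (mat 1 + (1/s) *\<^sub>R (G ** ((bR * P) *\<^sub>R mat 1) ** transpose G)))"
        by (rule mult_left_mono) (use al in auto)
      show "(1 - al) / 2 * (CARD('n) * log 2 t + log 2 (det (transpose G ** G))) \<le>
          (\<Sum>n\<in>UNIV. (1 - al) / 2 * log 2 (1 + t * inc t g n))"
        unfolding e using X unfolding t_def by linarith
    qed
  qed
qed

locale th3 =
  fixes R1 R2 :: "real^('n::{finite,linorder})^('n::{finite,linorder})"
    and H1 H2 :: "real^('m::finite)^('n::{finite,linorder})"
    and G1 G2 :: "real^('n::{finite,linorder})^('m::finite)"
    and U1 U2 :: "real^('m::finite)^('n::{finite,linorder})"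
    and al b1 b2 bR s :: real
  assumes rH1: "rank H1 = CARD('n)" and rH2: "rank H2 = CARD('n)"
    and rG1: "rank G1 = CARD('n)" and rG2: "rank G2 = CARD('n)"
    and eH1: "H1 = R1 ** U1" and ut1: "upper_tri R1" and uU1: "U1 ** transpose U1 = mat 1"
    and eH2: "H2 = R2 ** U2" and ut2: "upper_tri R2" and uU2: "U2 ** transpose U2 = mat 1"
    and b1: "0 < b1" and b2: "0 < b2" and bR: "0 < bR" and s: "0 < s"
    and a0: "0 < al" and a1: "al < 1"
begin


definition "Rc P = Rcut al (b1 * P) (b2 * P) (\<lambda>_. bR * P) s s s H1 H2 G1 G2"
definition "Rd P = Rdist al (b1 * P) (b2 * P) (\<lambda>_. bR * P) s s s R1 R2 G1 G2"

definition "mm R b P = real CARD('n) * log 2 (b * P / (real CARD('n) * s)) + log 2 ((det R)^2)" for R :: "real^('n::{finite,linorder})^('n::{finite,linorder})"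
definition "bb G P = real CARD('n) * log 2 (bR * P / s) + log 2 (det (transpose G ** G))" for G :: "real^('n::{finite,linorder})^('m::finite)"
definition "um R b P = real CARD('n) * log 2 ((trace (matrix_inv R ** transpose (matrix_inv R)) + b * P / s) / real CARD('n)) + log 2 ((det R)^2)" for R :: "real^('n::{finite,linorder})^('n::{finite,linorder})"
definition "ud R b P = real CARD('n) * log 2 (((\<Sum>n\<in>UNIV. 1 / (R$n$n)^2) + b * P / s) / real CARD('n)) + log 2 ((det R)^2)" for R :: "real^('n::{finite,linorder})^('n::{finite,linorder})"
definition "ub G P = real CARD('n) * log 2 ((trace (matrix_inv (transpose G ** G)) + real CARD('n) * (bR * P) / s) / real CARD('n)) + log 2 (det (transpose G ** G))" for G :: "real^('n::{finite,linorder})^('m::finite)"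

lemma invR1: "invertible R1" by (rule R_invertible[OF rH1 eH1])
lemma invR2: "invertible R2" by (rule R_invertible[OF rH2 eH2])

lemma cut_upper_lo:
  assumes P: "0 < P" and z: "z \<in> {Ra1 + Ra2 | Ra1 Ra2 (Q1::real^('m::finite)^('m::finite)) (Q2::real^('m::finite)^('m::finite)) (QR::real^('n::{finite,linorder})^('n::{finite,linorder})).
        psd Q1 \<and> psd Q2 \<and> psd QR \<and> 0 \<le> Ra1 \<and> 0 \<le> Ra2 \<and>
        trace Q1 \<le> b1 * P \<and> trace Q2 \<le> b2 * P \<and> trace QR \<le> (\<Sum>n\<in>(UNIV::('n::{finite,linorder}) set). bR * P) \<and>
        Ra1 \<le> al / 2 * log 2 (det (mat 1 + (1 / s) *\<^sub>R (H1 ** Q1 ** transpose H1))) \<and>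
        Ra2 \<le> al / 2 * log 2 (det (mat 1 + (1 / s) *\<^sub>R (H2 ** Q2 ** transpose H2))) \<and>
        Ra1 \<le> (1 - al) / 2 * log 2 (det (mat 1 + (1 / s) *\<^sub>R (G2 ** QR ** transpose G2))) \<and>
        Ra2 \<le> (1 - al) / 2 * log 2 (det (mat 1 + (1 / s) *\<^sub>R (G1 ** QR ** transpose G1)))}"
  shows "z \<le> al / 2 * (um R1 b1 P + um R2 b2 P)" "z \<le> (1 - al) / 2 * (ub G2 P + ub G1 P)"
proof -
  obtain Ra1 Ra2 Q1 Q2 QR where h: "z = Ra1 + Ra2" "psd Q1" "psd Q2" "psd QR" "0 \<le> Ra1" "0 \<le> Ra2"
    "trace Q1 \<le> b1 * P" "trace Q2 \<le> b2 * P" "trace QR \<le> (\<Sum>n\<in>(UNIV::('n::{finite,linorder}) set). bR * P)"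
    "Ra1 \<le> al / 2 * log 2 (det (mat 1 + (1 / s) *\<^sub>R (H1 ** Q1 ** transpose H1)))"
    "Ra2 \<le> al / 2 * log 2 (det (mat 1 + (1 / s) *\<^sub>R (H2 ** Q2 ** transpose H2)))"
    "Ra1 \<le> (1 - al) / 2 * log 2 (det (mat 1 + (1 / s) *\<^sub>R (G2 ** QR ** transpose G2)))"
    "Ra2 \<le> (1 - al) / 2 * log 2 (det (mat 1 + (1 / s) *\<^sub>R (G1 ** QR ** transpose G1)))"
    using z by blast
  have m1: "log 2 (det (mat 1 + (1 / s) *\<^sub>R (H1 ** Q1 ** transpose H1))) \<le> um R1 b1 P"
    unfolding um_def eH1 using cut_mac_upper[OF invR1 uU1 h(2) h(7) s] b1 P by simp
  have m2: "log 2 (det (mat 1 + (1 / s) *\<^sub>R (H2 ** Q2 ** transpose H2))) \<le> um R2 b2 P"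
    unfolding um_def eH2 using cut_mac_upper[OF invR2 uU2 h(3) h(8) s] b2 P by simp
  have T: "0 < (\<Sum>n\<in>(UNIV::('n::{finite,linorder}) set). bR * P)" using bR P by simp
  have tQR: "trace QR \<le> real CARD('n) * (bR * P)" using h(9) by simp
  have TT: "0 < real CARD('n) * (bR * P)" using bR P by simp
  have c2: "log 2 (det (mat 1 + (1 / s) *\<^sub>R (G2 ** QR ** transpose G2))) \<le> ub G2 P"
    unfolding ub_def using cut_bc_upper[OF rG2 h(4) tQR s TT] by simp
  have c1: "log 2 (det (mat 1 + (1 / s) *\<^sub>R (G1 ** QR ** transpose G1))) \<le> ub G1 P"
    unfolding ub_def using cut_bc_upper[OF rG1 h(4) tQR s TT] by simp
  have "al / 2 * log 2 (det (mat 1 + (1 / s) *\<^sub>R (H1 ** Q1 ** transpose H1))) \<le> al / 2 * um R1 b1 P"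
    by (rule mult_left_mono[OF m1]) (use a0 in simp)
  hence "Ra1 \<le> al / 2 * um R1 b1 P" using h(10) by linarith
  moreover have "al / 2 * log 2 (det (mat 1 + (1 / s) *\<^sub>R (H2 ** Q2 ** transpose H2))) \<le> al / 2 * um R2 b2 P"
    by (rule mult_left_mono[OF m2]) (use a0 in simp)
  hence "Ra2 \<le> al / 2 * um R2 b2 P" using h(11) by linarith
  moreover have "al / 2 * (um R1 b1 P + um R2 b2 P) = al / 2 * um R1 b1 P + al / 2 * um R2 b2 P"
    by (rule distrib_left)
  ultimately show "z \<le> al / 2 * (um R1 b1 P + um R2 b2 P)" using h(1) by linarith
  have "(1 - al) / 2 * log 2 (det (mat 1 + (1 / s) *\<^sub>R (G2 ** QR ** transpose G2))) \<le> (1 - al) / 2 * ub G2 P"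
    by (rule mult_left_mono[OF c2]) (use a1 in simp)
  hence "Ra1 \<le> (1 - al) / 2 * ub G2 P" using h(12) by linarith
  moreover have "(1 - al) / 2 * log 2 (det (mat 1 + (1 / s) *\<^sub>R (G1 ** QR ** transpose G1))) \<le> (1 - al) / 2 * ub G1 P"
    by (rule mult_left_mono[OF c1]) (use a1 in simp)
  hence "Ra2 \<le> (1 - al) / 2 * ub G1 P" using h(13) by linarith
  moreover have "(1 - al) / 2 * (ub G2 P + ub G1 P) = (1 - al) / 2 * ub G2 P + (1 - al) / 2 * ub G1 P"
    by (rule distrib_left)
  ultimately show "z \<le> (1 - al) / 2 * (ub G2 P + ub G1 P)" using h(1) by linarith
qed

lemma Rc_bounds:
  assumes P: "0 < P"
  shows "min (al / 2 * mm R1 b1 P) ((1 - al) / 2 * bb G2 P) + min (al / 2 * mm R2 b2 P) ((1 - al) / 2 * bb G1 P) \<le> Rc P"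
    "Rc P \<le> al / 2 * (um R1 b1 P + um R2 b2 P)" "Rc P \<le> (1 - al) / 2 * (ub G2 P + ub G1 P)"
proof -
  define Q1 where "Q1 = (b1 * P / real CARD('n)) *\<^sub>R (transpose U1 ** U1)"
  define Q2 where "Q2 = (b2 * P / real CARD('n)) *\<^sub>R (transpose U2 ** U2)"
  define QR :: "real^('n::{finite,linorder})^('n::{finite,linorder})" where "QR = (bR * P) *\<^sub>R mat 1"
  define M1 where "M1 = log 2 (det (mat 1 + (1 / s) *\<^sub>R (H1 ** Q1 ** transpose H1)))"
  define M2 where "M2 = log 2 (det (mat 1 + (1 / s) *\<^sub>R (H2 ** Q2 ** transpose H2)))"
  define B2 where "B2 = log 2 (det (mat 1 + (1 / s) *\<^sub>R (G2 ** QR ** transpose G2)))"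
  define B1 where "B1 = log 2 (det (mat 1 + (1 / s) *\<^sub>R (G1 ** QR ** transpose G1)))"
  have q1: "0 \<le> b1 * P / real CARD('n)" using b1 P by simp
  have q2: "0 \<le> b2 * P / real CARD('n)" using b2 P by simp
  have pQ1: "psd Q1" unfolding Q1_def by (rule Q0_facts(1)[OF uU1 q1])
  have pQ2: "psd Q2" unfolding Q2_def by (rule Q0_facts(1)[OF uU2 q2])
  have pQR: "psd QR" unfolding QR_def using bR P by (intro psd_scale) (auto simp: psd_def)
  have tQ1: "trace Q1 \<le> b1 * P" unfolding Q1_def using Q0_facts(2)[OF uU1 q1] by simp
  have tQ2: "trace Q2 \<le> b2 * P" unfolding Q2_def using Q0_facts(2)[OF uU2 q2] by simp
  have tQR: "trace QR \<le> (\<Sum>n\<in>(UNIV::('n::{finite,linorder}) set). bR * P)"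
    unfolding QR_def by (simp add: trace_scaleR trace_I)
  have lM1: "mm R1 b1 P \<le> M1" unfolding mm_def M1_def Q1_def eH1
    using cut_mac_lower[OF invR1 uU1 _ s, of "b1 * P / real CARD('n)"] b1 P by simp
  have lM2: "mm R2 b2 P \<le> M2" unfolding mm_def M2_def Q2_def eH2
    using cut_mac_lower[OF invR2 uU2 _ s, of "b2 * P / real CARD('n)"] b2 P by simp
  have lB2: "bb G2 P \<le> B2" unfolding bb_def B2_def QR_def
    using cut_bc_lower(1)[OF rG2 _ s, of "bR * P"] bR P by simp
  have lB1: "bb G1 P \<le> B1" unfolding bb_def B1_def QR_def
    using cut_bc_lower(1)[OF rG1 _ s, of "bR * P"] bR P by simp
  have nn: "0 \<le> log 2 (det (mat 1 + (1 / s) *\<^sub>R (A ** Q ** transpose A)))" if "psd Q" for A :: "real^'k^'j" and Q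
  proof -
    have "1 \<le> det (mat 1 + (1 / s) *\<^sub>R (A ** Q ** transpose A))"
      by (rule det_I_psd, rule psd_scale) (use s psd_sandwich[OF that] in auto)
    hence "log 2 1 \<le> log 2 (det (mat 1 + (1 / s) *\<^sub>R (A ** Q ** transpose A)))" by (intro log_mono) auto
    thus ?thesis by simp
  qed
  have M10: "0 \<le> M1" unfolding M1_def by (rule nn[OF pQ1])
  have M20: "0 \<le> M2" unfolding M2_def by (rule nn[OF pQ2])
  have B10: "0 \<le> B1" unfolding B1_def by (rule nn[OF pQR])
  have B20: "0 \<le> B2" unfolding B2_def by (rule nn[OF pQR])
  define Ra1 where "Ra1 = min (al / 2 * M1) ((1 - al) / 2 * B2)"
  define Ra2 where "Ra2 = min (al / 2 * M2) ((1 - al) / 2 * B1)"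
  have R10: "0 \<le> Ra1" unfolding Ra1_def using M10 B20 a0 a1 by simp
  have R20: "0 \<le> Ra2" unfolding Ra2_def using M20 B10 a0 a1 by simp
  let ?S = "{Ra1 + Ra2 | Ra1 Ra2 (Q1::real^('m::finite)^('m::finite)) (Q2::real^('m::finite)^('m::finite)) (QR::real^('n::{finite,linorder})^('n::{finite,linorder})).
        psd Q1 \<and> psd Q2 \<and> psd QR \<and> 0 \<le> Ra1 \<and> 0 \<le> Ra2 \<and>
        trace Q1 \<le> b1 * P \<and> trace Q2 \<le> b2 * P \<and> trace QR \<le> (\<Sum>n\<in>(UNIV::('n::{finite,linorder}) set). bR * P) \<and>
        Ra1 \<le> al / 2 * log 2 (det (mat 1 + (1 / s) *\<^sub>R (H1 ** Q1 ** transpose H1))) \<and>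
        Ra2 \<le> al / 2 * log 2 (det (mat 1 + (1 / s) *\<^sub>R (H2 ** Q2 ** transpose H2))) \<and>
        Ra1 \<le> (1 - al) / 2 * log 2 (det (mat 1 + (1 / s) *\<^sub>R (G2 ** QR ** transpose G2))) \<and>
        Ra2 \<le> (1 - al) / 2 * log 2 (det (mat 1 + (1 / s) *\<^sub>R (G1 ** QR ** transpose G1)))}"
  have RcS: "Rc P = Sup ?S" unfolding Rc_def Rcut_def by simp
  have wS: "Ra1 + Ra2 \<in> ?S"
  proof -
    have c: "Ra1 \<le> al / 2 * M1" "Ra1 \<le> (1 - al) / 2 * B2" "Ra2 \<le> al / 2 * M2" "Ra2 \<le> (1 - al) / 2 * B1"
      unfolding Ra1_def Ra2_def by auto
    show ?thesis using pQ1 pQ2 pQR R10 R20 tQ1 tQ2 tQR c unfolding M1_def M2_def B1_def B2_def by blast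
  qed
  have w: "min (al / 2 * mm R1 b1 P) ((1 - al) / 2 * bb G2 P) + min (al / 2 * mm R2 b2 P) ((1 - al) / 2 * bb G1 P)
      \<le> Ra1 + Ra2"
  proof -
    have "al / 2 * mm R1 b1 P \<le> al / 2 * M1" using lM1 a0 by (intro mult_left_mono) auto
    moreover have "(1 - al) / 2 * bb G2 P \<le> (1 - al) / 2 * B2" using lB2 a1 by (intro mult_left_mono) auto
    moreover have "al / 2 * mm R2 b2 P \<le> al / 2 * M2" using lM2 a0 by (intro mult_left_mono) auto
    moreover have "(1 - al) / 2 * bb G1 P \<le> (1 - al) / 2 * B1" using lB1 a1 by (intro mult_left_mono) auto
    ultimately show ?thesis unfolding Ra1_def Ra2_def by linarith
  qed
  have ub1: "\<And>z. z \<in> ?S \<Longrightarrow> z \<le> al / 2 * (um R1 b1 P + um R2 b2 P)"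
    by (rule cut_upper_lo(1)[OF P])
  have ub2: "\<And>z. z \<in> ?S \<Longrightarrow> z \<le> (1 - al) / 2 * (ub G2 P + ub G1 P)"
    by (rule cut_upper_lo(2)[OF P])
  show "min (al / 2 * mm R1 b1 P) ((1 - al) / 2 * bb G2 P) + min (al / 2 * mm R2 b2 P) ((1 - al) / 2 * bb G1 P) \<le> Rc P"
    using w sup_bounds(1)[OF wS ub1] RcS by linarith
  show "Rc P \<le> al / 2 * (um R1 b1 P + um R2 b2 P)" using sup_bounds(2)[OF wS ub1] RcS by simp
  show "Rc P \<le> (1 - al) / 2 * (ub G2 P + ub G1 P)" using sup_bounds(2)[OF wS ub2] RcS by simp
qed

abbreviation "DS P \<equiv> {(\<Sum>n\<in>UNIV. Ra1 n) + (\<Sum>n\<in>UNIV. Ra2 n) | (Ra1 :: 'n::{finite,linorder} \<Rightarrow> real) (Ra2 :: 'n \<Rightarrow> real) (Pw1 :: 'n \<Rightarrow> real) (Pw2 :: 'n \<Rightarrow> real).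
        (\<forall>n. 0 \<le> Pw1 n \<and> 0 \<le> Pw2 n \<and> 0 \<le> Ra1 n \<and> 0 \<le> Ra2 n) \<and>
        (\<forall>n. Ra1 n \<le> pos (al / 2 * log 2 ((\<bar>R1 $ n $ n\<bar>)\<^sup>2 * Pw1 n / s))) \<and>
        (\<forall>n. Ra2 n \<le> pos (al / 2 * log 2 ((\<bar>R2 $ n $ n\<bar>)\<^sup>2 * Pw2 n / s))) \<and>
        (\<forall>S. (\<Sum>n\<in>S. Ra1 n) \<le> bc_bound al s (\<lambda>_. bR * P) G2 S) \<and>
        (\<forall>S. (\<Sum>n\<in>S. Ra2 n) \<le> bc_bound al s (\<lambda>_. bR * P) G1 S) \<and>
        (\<Sum>n\<in>UNIV. Pw1 n) \<le> b1 * P \<and> (\<Sum>n\<in>UNIV. Pw2 n) \<le> b2 * P}"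

lemma Rd_eq: "Rd P = Sup (DS P)" unfolding Rd_def Rdist_def by simp

lemma dist_upper:
  assumes P: "0 < P" and z: "z \<in> DS P"
  shows "z \<le> al / 2 * (ud R1 b1 P + ud R2 b2 P)" "z \<le> (1 - al) / 2 * (ub G2 P + ub G1 P)"
proof -
  obtain Ra1 Ra2 Pw1 Pw2 where h: "z = (\<Sum>n\<in>UNIV. Ra1 n) + (\<Sum>n\<in>UNIV. Ra2 n)"
    "\<forall>n. 0 \<le> Pw1 n \<and> 0 \<le> Pw2 n \<and> 0 \<le> Ra1 n \<and> 0 \<le> Ra2 n"
    "\<forall>n. Ra1 n \<le> pos (al / 2 * log 2 ((\<bar>R1 $ n $ n\<bar>)\<^sup>2 * Pw1 n / s))"
    "\<forall>n. Ra2 n \<le> pos (al / 2 * log 2 ((\<bar>R2 $ n $ n\<bar>)\<^sup>2 * Pw2 n / s))"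
    "\<forall>S. (\<Sum>n\<in>S. Ra1 n) \<le> bc_bound al s (\<lambda>_. bR * P) G2 S"
    "\<forall>S. (\<Sum>n\<in>S. Ra2 n) \<le> bc_bound al s (\<lambda>_. bR * P) G1 S"
    "(\<Sum>n\<in>UNIV. Pw1 n) \<le> b1 * P" "(\<Sum>n\<in>UNIV. Pw2 n) \<le> b2 * P"
    using z by blast
  have d1: "(\<Sum>n\<in>UNIV. Ra1 n) \<le> al / 2 * ud R1 b1 P"
    using dist_mac_upper[OF invR1 ut1 _ s _ h(7), of al Ra1] h(2,3) a0 unfolding ud_def by (auto simp: add.commute)
  have d2: "(\<Sum>n\<in>UNIV. Ra2 n) \<le> al / 2 * ud R2 b2 P"
    using dist_mac_upper[OF invR2 ut2 _ s _ h(8), of al Ra2] h(2,4) a0 unfolding ud_def by (auto simp: add.commute)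
  show "z \<le> al / 2 * (ud R1 b1 P + ud R2 b2 P)" using d1 d2 h(1) by (simp add: distrib_left)
  have bRP: "0 < bR * P" using bR P by simp
  have e1: "(\<Sum>n\<in>UNIV. Ra1 n) \<le> (1 - al) / 2 * ub G2 P"
    using dist_bc_upper[OF rG2 bRP s _ , of al Ra1] h(5) a1 unfolding ub_def by (simp add: add.commute)
  have e2: "(\<Sum>n\<in>UNIV. Ra2 n) \<le> (1 - al) / 2 * ub G1 P"
    using dist_bc_upper[OF rG1 bRP s _ , of al Ra2] h(6) a1 unfolding ub_def by (simp add: add.commute)
  show "z \<le> (1 - al) / 2 * (ub G2 P + ub G1 P)" using e1 e2 h(1) by (simp add: distrib_left)
qed

lemma Rd_lo:
  assumes alo: "al < 1/2"
  shows "eventually (\<lambda>P. al / 2 * (mm R1 b1 P + mm R2 b2 P) \<le> Rd P \<and> Rd P \<le> al / 2 * (ud R1 b1 P + ud R2 b2 P)) at_top"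
proof -
  note w1 = dist_wit_lo[OF invR1 ut1 rG2 a0 alo b1 bR s]
  note w2 = dist_wit_lo[OF invR2 ut2 rG1 a0 alo b2 bR s]
  show ?thesis using w1 w2 eventually_gt_at_top[of 0]
  proof (eventually_elim)
    case (elim P)
    have P: "0 < P" using elim(3) .
    define Ra1 where "Ra1 n = al / 2 * log 2 ((R1$n$n)^2 * (b1 * P / CARD('n)) / s)" for n
    define Ra2 where "Ra2 n = al / 2 * log 2 ((R2$n$n)^2 * (b2 * P / CARD('n)) / s)" for n
    define Pw1 :: "'n \<Rightarrow> real" where "Pw1 n = b1 * P / CARD('n)" for n
    define Pw2 :: "'n \<Rightarrow> real" where "Pw2 n = b2 * P / CARD('n)" for n
    have c1: "\<forall>n. Ra1 n \<le> pos (al / 2 * log 2 ((\<bar>R1 $ n $ n\<bar>)\<^sup>2 * Pw1 n / s))"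
      unfolding Ra1_def Pw1_def by (simp add: pos_def)
    have c2: "\<forall>n. Ra2 n \<le> pos (al / 2 * log 2 ((\<bar>R2 $ n $ n\<bar>)\<^sup>2 * Pw2 n / s))"
      unfolding Ra2_def Pw2_def by (simp add: pos_def)
    have p1: "(\<Sum>n\<in>UNIV. Pw1 n) \<le> b1 * P" unfolding Pw1_def by simp
    have p2: "(\<Sum>n\<in>UNIV. Pw2 n) \<le> b2 * P" unfolding Pw2_def by simp
    have nn: "\<forall>n. 0 \<le> Pw1 n \<and> 0 \<le> Pw2 n \<and> 0 \<le> Ra1 n \<and> 0 \<le> Ra2 n"
      unfolding Pw1_def Pw2_def Ra1_def Ra2_def using elim(1,2) b1 b2 P by auto
    have bc1: "\<forall>S. (\<Sum>n\<in>S. Ra1 n) \<le> bc_bound al s (\<lambda>_. bR * P) G2 S" unfolding Ra1_def using elim(1) by blast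
    have bc2: "\<forall>S. (\<Sum>n\<in>S. Ra2 n) \<le> bc_bound al s (\<lambda>_. bR * P) G1 S" unfolding Ra2_def using elim(2) by blast
    have wS: "(\<Sum>n\<in>UNIV. Ra1 n) + (\<Sum>n\<in>UNIV. Ra2 n) \<in> DS P"
      using nn c1 c2 bc1 bc2 p1 p2 by blast
    have val: "(\<Sum>n\<in>UNIV. Ra1 n) + (\<Sum>n\<in>UNIV. Ra2 n) = al / 2 * (mm R1 b1 P + mm R2 b2 P)"
      unfolding Ra1_def Ra2_def mm_def using elim(1,2) by (simp add: distrib_left add.commute)
    have ub: "\<And>z. z \<in> DS P \<Longrightarrow> z \<le> al / 2 * (ud R1 b1 P + ud R2 b2 P)"
      by (rule dist_upper(1)[OF P])
    show ?case using sup_bounds[OF wS ub] val Rd_eq[of P] by simp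
  qed
qed

lemma Rd_hi:
  assumes ahi: "1/2 < al"
  shows "eventually (\<lambda>P. (1 - al) / 2 * (bb G2 P + bb G1 P) \<le> Rd P \<and> Rd P \<le> (1 - al) / 2 * (ub G2 P + ub G1 P)) at_top"
proof -
  note w1 = dist_wit_hi[OF invR1 ut1 rG2 ahi a1 b1 bR s]
  note w2 = dist_wit_hi[OF invR2 ut2 rG1 ahi a1 b2 bR s]
  show ?thesis using w1 w2 eventually_gt_at_top[of 0]
  proof (eventually_elim)
    case (elim P)
    have P: "0 < P" using elim(3) .
    define Ra1 where "Ra1 n = (1 - al) / 2 * log 2 (1 + (bR * P / s) * inc (bR * P / s) (\<lambda>n. column n G2) n)" for n
    define Ra2 where "Ra2 n = (1 - al) / 2 * log 2 (1 + (bR * P / s) * inc (bR * P / s) (\<lambda>n. column n G1) n)" for n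
    define Pw1 :: "'n \<Rightarrow> real" where "Pw1 n = b1 * P / CARD('n)" for n
    define Pw2 :: "'n \<Rightarrow> real" where "Pw2 n = b2 * P / CARD('n)" for n
    have c1: "\<forall>n. Ra1 n \<le> pos (al / 2 * log 2 ((\<bar>R1 $ n $ n\<bar>)\<^sup>2 * Pw1 n / s))"
    proof
      fix n
      have "Ra1 n \<le> al / 2 * log 2 ((R1$n$n)^2 * (b1 * P / CARD('n)) / s)" unfolding Ra1_def using elim(1) by blast
      thus "Ra1 n \<le> pos (al / 2 * log 2 ((\<bar>R1 $ n $ n\<bar>)\<^sup>2 * Pw1 n / s))" unfolding Pw1_def pos_def by simp
    qed
    have c2: "\<forall>n. Ra2 n \<le> pos (al / 2 * log 2 ((\<bar>R2 $ n $ n\<bar>)\<^sup>2 * Pw2 n / s))"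
    proof
      fix n
      have "Ra2 n \<le> al / 2 * log 2 ((R2$n$n)^2 * (b2 * P / CARD('n)) / s)" unfolding Ra2_def using elim(2) by blast
      thus "Ra2 n \<le> pos (al / 2 * log 2 ((\<bar>R2 $ n $ n\<bar>)\<^sup>2 * Pw2 n / s))" unfolding Pw2_def pos_def by simp
    qed
    have p1: "(\<Sum>n\<in>UNIV. Pw1 n) \<le> b1 * P" unfolding Pw1_def by simp
    have p2: "(\<Sum>n\<in>UNIV. Pw2 n) \<le> b2 * P" unfolding Pw2_def by simp
    have nn: "\<forall>n. 0 \<le> Pw1 n \<and> 0 \<le> Pw2 n \<and> 0 \<le> Ra1 n \<and> 0 \<le> Ra2 n"
      unfolding Pw1_def Pw2_def Ra1_def Ra2_def using elim(1,2) b1 b2 P by auto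
    have bc1: "\<forall>S. (\<Sum>n\<in>S. Ra1 n) \<le> bc_bound al s (\<lambda>_. bR * P) G2 S" unfolding Ra1_def using elim(1) by blast
    have bc2: "\<forall>S. (\<Sum>n\<in>S. Ra2 n) \<le> bc_bound al s (\<lambda>_. bR * P) G1 S" unfolding Ra2_def using elim(2) by blast
    have wS: "(\<Sum>n\<in>UNIV. Ra1 n) + (\<Sum>n\<in>UNIV. Ra2 n) \<in> DS P"
      using nn c1 c2 bc1 bc2 p1 p2 by blast
    have v1: "(1 - al) / 2 * bb G2 P \<le> (\<Sum>n\<in>UNIV. Ra1 n)" unfolding Ra1_def bb_def using elim(1) by simp
    have v2: "(1 - al) / 2 * bb G1 P \<le> (\<Sum>n\<in>UNIV. Ra2 n)" unfolding Ra2_def bb_def using elim(2) by simp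
    have ub: "\<And>z. z \<in> DS P \<Longrightarrow> z \<le> (1 - al) / 2 * (ub G2 P + ub G1 P)"
      by (rule dist_upper(2)[OF P])
    have "(1 - al) / 2 * (bb G2 P + bb G1 P) = (1 - al) / 2 * bb G2 P + (1 - al) / 2 * bb G1 P"
      by (rule distrib_left)
    thus ?case using sup_bounds[OF wS ub] v1 v2 Rd_eq[of P] by linarith
  qed
qed

end

lemma diff_lim:
  fixes a be s N :: real
  assumes a: "0 \<le> a" and be: "0 < be" and s: "0 < s" and N: "0 < N"
  shows "((\<lambda>P. N * (log 2 ((a + be * P / s) / N) - log 2 (be * P / (N * s)))) \<longlongrightarrow> 0) at_top"
proof -
  have k: "0 < be / s" using be s by simp
  have l: "((\<lambda>P. N * log 2 ((a + (be / s) * P) / ((be / s) * P))) \<longlongrightarrow> N * 0) at_top"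
    by (intro tendsto_mult tendsto_const lim_eps[OF a k])
  have "eventually (\<lambda>P. N * log 2 ((a + (be / s) * P) / ((be / s) * P)) =
      N * (log 2 ((a + be * P / s) / N) - log 2 (be * P / (N * s)))) at_top"
    using eventually_gt_at_top[of 0]
  proof (rule eventually_mono)
    fix P :: real assume P: "0 < P"
    have p1: "0 < (a + be * P / s) / N" using a be s N P by (simp add: add_nonneg_pos)
    have p2: "0 < be * P / (N * s)" using be s N P by simp
    have "log 2 ((a + be * P / s) / N) - log 2 (be * P / (N * s)) =
        log 2 (((a + be * P / s) / N) / (be * P / (N * s)))"
      using log_divide_pos[OF p1 p2, of 2] by simp
    also have "((a + be * P / s) / N) / (be * P / (N * s)) = (a + (be / s) * P) / ((be / s) * P)"
      using N s P be by (simp add: field_simps)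
    finally show "N * log 2 ((a + (be / s) * P) / ((be / s) * P)) =
      N * (log 2 ((a + be * P / s) / N) - log 2 (be * P / (N * s)))" by simp
  qed
  from tendsto_cong[OF this] l show ?thesis by simp
qed

context th3
begin

lemma lim_um:
  fixes R :: "real^('n::{finite,linorder})^('n::{finite,linorder})"
  assumes b: "0 < b"
  shows "((\<lambda>P. um R b P - mm R b P) \<longlongrightarrow> 0) at_top"
proof -
  have a: "0 \<le> trace (matrix_inv R ** transpose (matrix_inv R))" by (rule psd_trace_nonneg[OF psd_gram])
  have "((\<lambda>P. real CARD('n) * (log 2 ((trace (matrix_inv R ** transpose (matrix_inv R)) + b * P / s) / real CARD('n))
      - log 2 (b * P / (real CARD('n) * s)))) \<longlongrightarrow> 0) at_top"
    by (rule diff_lim[OF a b s]) simp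
  thus ?thesis unfolding um_def mm_def by (simp add: algebra_simps)
qed

lemma lim_ud:
  fixes R :: "real^('n::{finite,linorder})^('n::{finite,linorder})"
  assumes b: "0 < b"
  shows "((\<lambda>P. ud R b P - mm R b P) \<longlongrightarrow> 0) at_top"
proof -
  have a: "0 \<le> (\<Sum>n\<in>UNIV. 1 / (R$n$n)^2)" by (intro sum_nonneg) simp
  have "((\<lambda>P. real CARD('n) * (log 2 (((\<Sum>n\<in>UNIV. 1 / (R$n$n)^2) + b * P / s) / real CARD('n))
      - log 2 (b * P / (real CARD('n) * s)))) \<longlongrightarrow> 0) at_top"
    by (rule diff_lim[OF a b s]) simp
  thus ?thesis unfolding ud_def mm_def by (simp add: algebra_simps)
qed

lemma lim_ub:
  fixes G :: "real^('n::{finite,linorder})^('m::finite)"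
  assumes rk: "rank G = CARD('n)"
  shows "((\<lambda>P. ub G P - bb G P) \<longlongrightarrow> 0) at_top"
proof -
  have a: "0 \<le> trace (matrix_inv (transpose G ** G))" by (rule psd_trace_nonneg[OF A_facts(3)[OF rk]])
  have be: "0 < real CARD('n) * bR" using bR by simp
  have "((\<lambda>P. real CARD('n) * (log 2 ((trace (matrix_inv (transpose G ** G)) + (real CARD('n) * bR) * P / s) / real CARD('n))
      - log 2 ((real CARD('n) * bR) * P / (real CARD('n) * s)))) \<longlongrightarrow> 0) at_top"
    by (rule diff_lim[OF a be s]) simp
  moreover have "(real CARD('n) * bR) * P / (real CARD('n) * s) = bR * P / s" for P by simp
  moreover have "(real CARD('n) * bR) * P / s = real CARD('n) * (bR * P) / s" for P by simp
  ultimately show ?thesis unfolding ub_def bb_def by (simp add: algebra_simps)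
qed

lemma mm_eq: "mm R b P = real CARD('n) * log 2 ((b / (real CARD('n) * s)) * P) + log 2 ((det R)^2)"
  for R :: "real^('n::{finite,linorder})^('n::{finite,linorder})"
  unfolding mm_def by (simp add: field_simps)

lemma bb_eq: "bb G P = real CARD('n) * log 2 ((bR / s) * P) + log 2 (det (transpose G ** G))"
  for G :: "real^('n::{finite,linorder})^('m::finite)"
  unfolding bb_def by (simp add: field_simps)

lemma ev_mb:
  fixes R :: "real^('n::{finite,linorder})^('n::{finite,linorder})" and G :: "real^('n::{finite,linorder})^('m::finite)"
  assumes b: "0 < b" and c: "c1 < c2"
  shows "eventually (\<lambda>P. c1 * mm R b P \<le> c2 * bb G P) at_top"
    "eventually (\<lambda>P. c1 * bb G P \<le> c2 * mm R b P) at_top"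
proof -
  have N: "0 < real CARD('n)" by simp
  have K: "0 < b / (real CARD('n) * s)" using b s by simp
  have k: "0 < bR / s" using bR s by simp
  have cN: "c1 * real CARD('n) < c2 * real CARD('n)" using c N by simp
  show "eventually (\<lambda>P. c1 * mm R b P \<le> c2 * bb G P) at_top"
    using ev_cmp3[OF cN k K, of "c1 * log 2 ((det R)^2)" "c2 * log 2 (det (transpose G ** G))"]
    unfolding mm_eq bb_eq by (simp add: algebra_simps)
  show "eventually (\<lambda>P. c1 * bb G P \<le> c2 * mm R b P) at_top"
    using ev_cmp3[OF cN K k, of "c1 * log 2 (det (transpose G ** G))" "c2 * log 2 ((det R)^2)"]
    unfolding mm_eq bb_eq by (simp add: algebra_simps)
qed

end

theorem theorem3:
  fixes R1 R2 :: "((real, 'n::{finite,linorder}) vec, 'n) vec"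
    and H1 H2 :: "((real, 'm::finite) vec, 'n) vec"
    and G1 G2 :: "((real, 'n) vec, 'm) vec"
    and U1 U2 :: "((real, 'm) vec, 'n) vec"
    and \<alpha> \<beta>1 \<beta>2 \<beta>R \<sigma>2 :: real
  assumes "CARD('m) \<ge> CARD('n)"
    and "rank H1 = CARD('n)" and "rank H2 = CARD('n)"
    and "rank G1 = CARD('n)" and "rank G2 = CARD('n)"
    and "H1 = R1 ** U1" and "upper_tri R1" and "U1 ** transpose U1 = mat 1"
    and "H2 = R2 ** U2" and "upper_tri R2" and "U2 ** transpose U2 = mat 1"
    and "\<beta>1 > 0" and "\<beta>2 > 0" and "\<beta>R > 0" and "\<sigma>2 > 0"
    and "0 < \<alpha>" and "\<alpha> < 1" and "\<alpha> \<noteq> 1 / 2"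
  shows "((\<lambda>P. Rcut \<alpha> (\<beta>1 * P) (\<beta>2 * P) (\<lambda>_. \<beta>R * P) \<sigma>2 \<sigma>2 \<sigma>2 H1 H2 G1 G2
              - Rdist \<alpha> (\<beta>1 * P) (\<beta>2 * P) (\<lambda>_. \<beta>R * P) \<sigma>2 \<sigma>2 \<sigma>2 R1 R2 G1 G2)
          \<longlongrightarrow> 0) at_top"
proof -
  interpret th3 R1 R2 H1 H2 G1 G2 U1 U2 \<alpha> \<beta>1 \<beta>2 \<beta>R \<sigma>2
    by unfold_locales (use assms in auto)
  have eq: "(\<lambda>P. Rcut \<alpha> (\<beta>1 * P) (\<beta>2 * P) (\<lambda>_. \<beta>R * P) \<sigma>2 \<sigma>2 \<sigma>2 H1 H2 G1 G2
              - Rdist \<alpha> (\<beta>1 * P) (\<beta>2 * P) (\<lambda>_. \<beta>R * P) \<sigma>2 \<sigma>2 \<sigma>2 R1 R2 G1 G2) = (\<lambda>P. Rc P - Rd P)"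
    by (simp add: Rc_def Rd_def)
  have b1: "0 < \<beta>1" "0 < \<beta>2" using assms by auto
  show ?thesis unfolding eq
  proof (cases "\<alpha> < 1/2")
    case True
    have c: "\<alpha> / 2 < (1 - \<alpha>) / 2" using True by simp
    note e1 = ev_mb(1)[OF b1(1) c, of R1 G2]
    note e2 = ev_mb(1)[OF b1(2) c, of R2 G1]
    note e3 = Rd_lo[OF True]
    define f where "f P = - (\<alpha> / 2 * ((ud R1 \<beta>1 P - mm R1 \<beta>1 P) + (ud R2 \<beta>2 P - mm R2 \<beta>2 P)))" for P
    define h where "h P = \<alpha> / 2 * ((um R1 \<beta>1 P - mm R1 \<beta>1 P) + (um R2 \<beta>2 P - mm R2 \<beta>2 P))" for P
    have ev: "eventually (\<lambda>P. f P \<le> Rc P - Rd P \<and> Rc P - Rd P \<le> h P) at_top"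
      using e1 e2 e3 eventually_gt_at_top[of 0]
    proof (eventually_elim)
      case (elim P)
      note cb = Rc_bounds[OF elim(4)]
      have "\<alpha> / 2 * (mm R1 \<beta>1 P + mm R2 \<beta>2 P) \<le> Rc P"
        using cb(1) elim(1,2) by (simp add: distrib_left min_def split: if_splits)
      thus ?case using cb(2) elim(3) unfolding f_def h_def by (simp add: algebra_simps)
    qed
    have lf: "(f \<longlongrightarrow> 0) at_top"
    proof -
      have "((\<lambda>P. - (\<alpha> / 2 * ((ud R1 \<beta>1 P - mm R1 \<beta>1 P) + (ud R2 \<beta>2 P - mm R2 \<beta>2 P)))) \<longlongrightarrow> - (\<alpha> / 2 * (0 + 0))) at_top"
        by (intro tendsto_intros lim_ud b1)
      thus ?thesis unfolding f_def by simp
    qed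
    have lh: "(h \<longlongrightarrow> 0) at_top"
    proof -
      have "((\<lambda>P. \<alpha> / 2 * ((um R1 \<beta>1 P - mm R1 \<beta>1 P) + (um R2 \<beta>2 P - mm R2 \<beta>2 P))) \<longlongrightarrow> \<alpha> / 2 * (0 + 0)) at_top"
        by (intro tendsto_intros lim_um b1)
      thus ?thesis unfolding h_def by simp
    qed
    show "((\<lambda>P. Rc P - Rd P) \<longlongrightarrow> 0) at_top"
      by (rule tendsto_sandwich[OF _ _ lf lh]) (use ev in \<open>auto elim: eventually_mono\<close>)
  next
    case False
    hence hi: "1/2 < \<alpha>" using assms(18) by simp
    have c: "(1 - \<alpha>) / 2 < \<alpha> / 2" using hi by simp
    note e1 = ev_mb(2)[OF b1(1) c, of G2 R1]
    note e2 = ev_mb(2)[OF b1(2) c, of G1 R2]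
    note e3 = Rd_hi[OF hi]
    define f where "f P = - ((1 - \<alpha>) / 2 * ((ub G2 P - bb G2 P) + (ub G1 P - bb G1 P)))" for P
    define h where "h P = (1 - \<alpha>) / 2 * ((ub G2 P - bb G2 P) + (ub G1 P - bb G1 P))" for P
    have ev: "eventually (\<lambda>P. f P \<le> Rc P - Rd P \<and> Rc P - Rd P \<le> h P) at_top"
      using e1 e2 e3 eventually_gt_at_top[of 0]
    proof (eventually_elim)
      case (elim P)
      note cb = Rc_bounds[OF elim(4)]
      have "(1 - \<alpha>) / 2 * (bb G2 P + bb G1 P) \<le> Rc P"
        using cb(1) elim(1,2) by (simp add: distrib_left min_def split: if_splits)
      thus ?case using cb(3) elim(3) unfolding f_def h_def by (simp add: algebra_simps)
    qed
    have lf: "(f \<longlongrightarrow> 0) at_top"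
    proof -
      have "((\<lambda>P. - ((1 - \<alpha>) / 2 * ((ub G2 P - bb G2 P) + (ub G1 P - bb G1 P)))) \<longlongrightarrow> - ((1 - \<alpha>) / 2 * (0 + 0))) at_top"
        by (intro tendsto_intros lim_ub rG1 rG2)
      thus ?thesis unfolding f_def by simp
    qed
    have lh: "(h \<longlongrightarrow> 0) at_top"
    proof -
      have "((\<lambda>P. (1 - \<alpha>) / 2 * ((ub G2 P - bb G2 P) + (ub G1 P - bb G1 P))) \<longlongrightarrow> (1 - \<alpha>) / 2 * (0 + 0)) at_top"
        by (intro tendsto_intros lim_ub rG1 rG2)
      thus ?thesis unfolding h_def by simp
    qed
    show "((\<lambda>P. Rc P - Rd P) \<longlongrightarrow> 0) at_top"
      by (rule tendsto_sandwich[OF _ _ lf lh]) (use ev in \<open>auto elim: eventually_mono\<close>)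
  qed
qed

end
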